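(* Let $\mathcal F=\{K_4,C_5,C_6,C_7,B_5\}$ and let $G$ be an $\mathcal F$-free graph. If $G$ contains one of the configurations (C1)–(C13) below, and $H$ is the subgraph of $G$ induced by the vertices of that configuration, then $H$ is $(\mathcal F,4)$-boundary-reducible in $G$ with reduced part $R=V(H)\setminus B$, where $B$ is the boundary specified for the configuration (empty if none is specified). (C1) a vertex of degree at most $2$. (C2) three $3$-vertices $u,v,w$ with $uv,vw\in E(G)$. (C3) a triangle all of whose vertices are $3$-vertices. (C4) a diamond $D=\mathrm{Dia}(4-3,4,5^+)$ together with a $3$-vertex $u\notin V(D)$ adjacent to the middle $4$-vertex of $D$; boundary: the side $5^+$-vertex of $D$. (C5) $\mathrm{Dia}(3-3,5^+,5^+)$; boundary: its two side vertices. (C6) $\mathrm{Dia}(3-5^+,3,5^+)$; boundary: its middle $5^+$-vertex and its side $5^+$-vertex. (C7) $\mathrm{Dia}(5-4,3,3)$. (C8) $D_1=\mathrm{Dia}(4-4,5,3)$ and $D_2=\mathrm{Dia}(5-3,4,4^+)$, where the side $5$-vertex of $D_1$ is the middle $5$-vertex of $D_2$; $D_2$ has side vertices $s$ (a $4$-vertex) and $v$ (a $4^+$-vertex); boundary: $v$. (C9) two diamonds $D_1,D_2$, each $\mathrm{Dia}(3-4,4,5^+)$, such that the middle $4$-vertex of $D_1$ is adjacent to the middle $4$-vertex of $D_2$; boundary: the side $5^+$-vertices of $D_1$ and $D_2$. (C10) $D_1=\mathrm{Dia}(4-3,5^+,5)$ with side vertices $p$ (a $5^+$-vertex) and $q$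 (a $5$-vertex), and $D_2=\mathrm{Dia}(5-3,4,4^+)$ whose middle $5$-vertex is $q$, with side vertices a $4$-vertex and a $4^+$-vertex $v$; boundary: $p$ and $v$. (C11) $\mathrm{Dia}(4-4,3,4)$ together with a $3$-vertex outside it adjacent to one of its middle $4$-vertices. (C12) $D_1=\mathrm{Dia}(3-4,4,5^+)$ and $D_2=\mathrm{Dia}(4-4,4,3)$, where the middle $4$-vertex of $D_1$ is adjacent to a middle $4$-vertex of $D_2$; boundary: the side $5^+$-vertex of $D_1$. (C13) $D_1=\mathrm{Dia}(3-5,5,5)$ and $D_2,D_3$, each $\mathrm{Dia}(5-3,4,5^+)$, where the two side vertices of $D_1$ are the middle $5$-vertices of $D_2$ and of $D_3$, respectively; boundary: the side $5^+$-vertices of $D_2$ and $D_3$.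
   Context: $B_5$ is the book on $5$ vertices: an edge $xy$ plus three further vertices each adjacent to exactly $x$ and $y$. $\mathcal F$-free graph: no subgraph isomorphic to a member of $\mathcal F$. All degrees are degrees in $G$; a $d$-vertex ($d^+$-vertex) is a vertex of degree exactly $d$ (at least $d$). A diamond is a subgraph isomorphic to $K_4$ minus an edge; its two vertices of degree $3$ in it are middle vertices, the other two are side vertices. $\mathrm{Dia}(a-b,c,d)$ denotes a diamond whose middle vertices have degrees $a,b$ and whose side vertices have degrees $c,d$; an entry $s^+$ means degree at least $s$. Vertices of distinct pieces of a configuration are distinct except where explicitly identified. For an induced subgraph $H$ of $G$ and $\emptyset\neq R\subseteq V(H)$, $\deg_R(v)$ is the degree of $v$ in $G[R]$. A set $I\subseteq V(H)$ is $\mathcal F$-free if adding to $H$ a new vertex adjacent exactly to $I$ creates no subgraph isomorphic to a member of $\mathcal F$. For $f:R\to\mathbb Z$, an $f$-assignment is a list assignment $L$ on $R$ with $|L(v)|\ge f(v)$; $f\downarrow v$ is $f$ changed to value $1$ at $v$; $1_I$ is the indicator of $I$. $H$ is $(\mathcal F,k)$-boundary-reducible in $G$ with reduced part $R$ if (FIX) for every $v\in R$, $H[R]$ is properly $L$-colorable for every $((k-\deg_G+\deg_R)\downarrow v)$-assignment $L$, and (FORB) for every $\mathcal F$-free $I\subseteq R$ with $|I|\le k-2$, $H[R]$ is properly $L$-colorable for every $(k-\deg_G+\deg_R-1_I)$-assignment $L$. *)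

theory Defs
  imports Main
begin

definition graph :: "'a set \<Rightarrow> ('a \<Rightarrow> 'a \<Rightarrow> bool) \<Rightarrow> bool" where
  "graph V E \<longleftrightarrow> finite V \<and> (\<forall>u v. E u v \<longrightarrow> u \<in> V \<and> v \<in> V)
     \<and> (\<forall>u v. E u v \<longrightarrow> E v u) \<and> (\<forall>v. \<not> E v v)"

definition deg :: "'a set \<Rightarrow> ('a \<Rightarrow> 'a \<Rightarrow> bool) \<Rightarrow> 'a \<Rightarrow> nat" where
  "deg V E v = card {u \<in> V. E v u}"

definition has_K4 :: "'a set \<Rightarrow> ('a \<Rightarrow> 'a \<Rightarrow> bool) \<Rightarrow> bool" where
  "has_K4 V E \<longleftrightarrow> (\<exists>a b c d. distinct [a,b,c,d] \<and> {a,b,c,d} \<subseteq> V \<and>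
     E a b \<and> E a c \<and> E a d \<and> E b c \<and> E b d \<and> E c d)"

definition has_cycle :: "'a set \<Rightarrow> ('a \<Rightarrow> 'a \<Rightarrow> bool) \<Rightarrow> nat \<Rightarrow> bool" where
  "has_cycle V E k \<longleftrightarrow> (\<exists>f. inj_on f {..<k} \<and> f ` {..<k} \<subseteq> V \<and>
     (\<forall>i<k. E (f i) (f (Suc i mod k))))"

definition has_B5 :: "'a set \<Rightarrow> ('a \<Rightarrow> 'a \<Rightarrow> bool) \<Rightarrow> bool" where
  "has_B5 V E \<longleftrightarrow> (\<exists>x y a b c. distinct [x,y,a,b,c] \<and> {x,y,a,b,c} \<subseteq> V \<and> E x y \<and>
     E a x \<and> E a y \<and> E b x \<and> E b y \<and> E c x \<and> E c y)"

definition F_free :: "'a set \<Rightarrow> ('a \<Rightarrow> 'a \<Rightarrow> bool) \<Rightarrow> bool" where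
  "F_free V E \<longleftrightarrow> \<not> has_K4 V E \<and> \<not> has_cycle V E 5 \<and> \<not> has_cycle V E 6
     \<and> \<not> has_cycle V E 7 \<and> \<not> has_B5 V E"

text \<open>Edge relation of H = G[S] extended by a new vertex (None) adjacent exactly to I.\<close>
definition ext_edge :: "('a \<Rightarrow> 'a \<Rightarrow> bool) \<Rightarrow> 'a set \<Rightarrow> 'a set \<Rightarrow> 'a option \<Rightarrow> 'a option \<Rightarrow> bool" where
  "ext_edge E S I x y = (case (x, y) of
      (Some a, Some b) \<Rightarrow> a \<in> S \<and> b \<in> S \<and> E a b
    | (None, Some b) \<Rightarrow> b \<in> I
    | (Some a, None) \<Rightarrow> a \<in> I
    | (None, None) \<Rightarrow> False)"

definition F_free_set :: "('a \<Rightarrow> 'a \<Rightarrow> bool) \<Rightarrow> 'a set \<Rightarrow> 'a set \<Rightarrow> bool" where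
  "F_free_set E S I \<longleftrightarrow> I \<subseteq> S \<and> F_free (insert None (Some ` S)) (ext_edge E S I)"

definition deg_in :: "('a \<Rightarrow> 'a \<Rightarrow> bool) \<Rightarrow> 'a set \<Rightarrow> 'a \<Rightarrow> nat" where
  "deg_in E R v = card {u \<in> R. E v u}"

text \<open>L is an f-assignment on R (lists are finite sets of colours).\<close>
definition is_assignment :: "'a set \<Rightarrow> ('a \<Rightarrow> int) \<Rightarrow> ('a \<Rightarrow> nat set) \<Rightarrow> bool" where
  "is_assignment R f L \<longleftrightarrow> (\<forall>v\<in>R. finite (L v) \<and> f v \<le> int (card (L v)))"

definition L_colorable :: "('a \<Rightarrow> 'a \<Rightarrow> bool) \<Rightarrow> 'a set \<Rightarrow> ('a \<Rightarrow> nat set) \<Rightarrow> bool" where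
  "L_colorable E R L \<longleftrightarrow> (\<exists>c. (\<forall>v\<in>R. c v \<in> L v) \<and> (\<forall>u\<in>R. \<forall>v\<in>R. E u v \<longrightarrow> c u \<noteq> c v))"

definition bfun :: "'a set \<Rightarrow> ('a \<Rightarrow> 'a \<Rightarrow> bool) \<Rightarrow> 'a set \<Rightarrow> nat \<Rightarrow> 'a \<Rightarrow> int" where
  "bfun V E R k v = int k - int (deg V E v) + int (deg_in E R v)"

definition boundary_reducible :: "'a set \<Rightarrow> ('a \<Rightarrow> 'a \<Rightarrow> bool) \<Rightarrow> 'a set \<Rightarrow> 'a set \<Rightarrow> nat \<Rightarrow> bool" where
  "boundary_reducible V E S R k \<longleftrightarrow> R \<noteq> {} \<and> R \<subseteq> S \<and>
    (\<forall>v\<in>R. \<forall>L. is_assignment R ((bfun V E R k)(v := 1)) L \<longrightarrow> L_colorable E R L) \<and>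
    (\<forall>I. I \<subseteq> R \<and> F_free_set E S I \<and> card I + 2 \<le> k \<longrightarrow>
       (\<forall>L. is_assignment R (\<lambda>u. bfun V E R k u - (if u \<in> I then 1 else 0)) L
            \<longrightarrow> L_colorable E R L))"

text \<open>Diamond with middle vertices m1 m2 and side vertices s1 s2.\<close>
definition dia :: "('a \<Rightarrow> 'a \<Rightarrow> bool) \<Rightarrow> 'a \<Rightarrow> 'a \<Rightarrow> 'a \<Rightarrow> 'a \<Rightarrow> bool" where
  "dia E m1 m2 s1 s2 \<longleftrightarrow> distinct [m1,m2,s1,s2] \<and> E m1 m2 \<and>
     E m1 s1 \<and> E m2 s1 \<and> E m1 s2 \<and> E m2 s2"

definition config :: "'a set \<Rightarrow> ('a \<Rightarrow> 'a \<Rightarrow> bool) \<Rightarrow> 'a set \<Rightarrow> 'a set \<Rightarrow> bool" where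
  "config V E S B \<longleftrightarrow> (let d = deg V E in
   \<comment> \<open>C1\<close>
   (\<exists>v. v \<in> V \<and> d v \<le> 2 \<and> S = {v} \<and> B = {}) \<or>
   \<comment> \<open>C2\<close>
   (\<exists>u v w. distinct [u,v,w] \<and> d u = 3 \<and> d v = 3 \<and> d w = 3 \<and> E u v \<and> E v w
      \<and> S = {u,v,w} \<and> B = {}) \<or>
   \<comment> \<open>C3\<close>
   (\<exists>a b c. distinct [a,b,c] \<and> E a b \<and> E b c \<and> E a c \<and> d a = 3 \<and> d b = 3 \<and> d c = 3
      \<and> S = {a,b,c} \<and> B = {}) \<or>
   \<comment> \<open>C4\<close>
   (\<exists>m1 m2 s1 s2 u. dia E m1 m2 s1 s2 \<and> d m1 = 4 \<and> d m2 = 3 \<and> d s1 = 4 \<and> d s2 \<ge> 5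
      \<and> u \<notin> {m1,m2,s1,s2} \<and> d u = 3 \<and> E u m1 \<and> S = {m1,m2,s1,s2,u} \<and> B = {s2}) \<or>
   \<comment> \<open>C5\<close>
   (\<exists>m1 m2 s1 s2. dia E m1 m2 s1 s2 \<and> d m1 = 3 \<and> d m2 = 3 \<and> d s1 \<ge> 5 \<and> d s2 \<ge> 5
      \<and> S = {m1,m2,s1,s2} \<and> B = {s1,s2}) \<or>
   \<comment> \<open>C6\<close>
   (\<exists>m1 m2 s1 s2. dia E m1 m2 s1 s2 \<and> d m1 = 3 \<and> d m2 \<ge> 5 \<and> d s1 = 3 \<and> d s2 \<ge> 5
      \<and> S = {m1,m2,s1,s2} \<and> B = {m2,s2}) \<or>
   \<comment> \<open>C7\<close>
   (\<exists>m1 m2 s1 s2. dia E m1 m2 s1 s2 \<and> d m1 = 5 \<and> d m2 = 4 \<and> d s1 = 3 \<and> d s2 = 3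
      \<and> S = {m1,m2,s1,s2} \<and> B = {}) \<or>
   \<comment> \<open>C8\<close>
   (\<exists>a1 a2 q t b s v. distinct [a1,a2,q,t,b,s,v] \<and>
      dia E a1 a2 q t \<and> d a1 = 4 \<and> d a2 = 4 \<and> d q = 5 \<and> d t = 3 \<and>
      dia E q b s v \<and> d b = 3 \<and> d s = 4 \<and> d v \<ge> 4 \<and>
      S = {a1,a2,q,t,b,s,v} \<and> B = {v}) \<or>
   \<comment> \<open>C9\<close>
   (\<exists>x1 y1 z1 w1 x2 y2 z2 w2. distinct [x1,y1,z1,w1,x2,y2,z2,w2] \<and>
      dia E x1 y1 z1 w1 \<and> d x1 = 3 \<and> d y1 = 4 \<and> d z1 = 4 \<and> d w1 \<ge> 5 \<and>
      dia E x2 y2 z2 w2 \<and> d x2 = 3 \<and> d y2 = 4 \<and> d z2 = 4 \<and> d w2 \<ge> 5 \<and>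
      E y1 y2 \<and> S = {x1,y1,z1,w1,x2,y2,z2,w2} \<and> B = {w1,w2}) \<or>
   \<comment> \<open>C10\<close>
   (\<exists>a b p q c s v. distinct [a,b,p,q,c,s,v] \<and>
      dia E a b p q \<and> d a = 4 \<and> d b = 3 \<and> d p \<ge> 5 \<and> d q = 5 \<and>
      dia E q c s v \<and> d c = 3 \<and> d s = 4 \<and> d v \<ge> 4 \<and>
      S = {a,b,p,q,c,s,v} \<and> B = {p,v}) \<or>
   \<comment> \<open>C11\<close>
   (\<exists>m1 m2 s1 s2 u. dia E m1 m2 s1 s2 \<and> d m1 = 4 \<and> d m2 = 4 \<and> d s1 = 3 \<and> d s2 = 4
      \<and> u \<notin> {m1,m2,s1,s2} \<and> d u = 3 \<and> E u m1 \<and> S = {m1,m2,s1,s2,u} \<and> B = {}) \<or>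
   \<comment> \<open>C12\<close>
   (\<exists>x1 y1 z1 w1 m1 m2 s1 s2. distinct [x1,y1,z1,w1,m1,m2,s1,s2] \<and>
      dia E x1 y1 z1 w1 \<and> d x1 = 3 \<and> d y1 = 4 \<and> d z1 = 4 \<and> d w1 \<ge> 5 \<and>
      dia E m1 m2 s1 s2 \<and> d m1 = 4 \<and> d m2 = 4 \<and> d s1 = 4 \<and> d s2 = 3 \<and>
      E y1 m1 \<and> S = {x1,y1,z1,w1,m1,m2,s1,s2} \<and> B = {w1}) \<or>
   \<comment> \<open>C13\<close>
   (\<exists>a b c x e f g h i j. distinct [a,b,c,x,e,f,g,h,i,j] \<and>
      dia E a b c x \<and> d a = 3 \<and> d b = 5 \<and> d c = 5 \<and> d x = 5 \<and>
      dia E c e f g \<and> d e = 3 \<and> d f = 4 \<and> d g \<ge> 5 \<and>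
      dia E x h i j \<and> d h = 3 \<and> d i = 4 \<and> d j \<ge> 5 \<and>
      S = {a,b,c,x,e,f,g,h,i,j} \<and> B = {g,j})
  )"

end

theory Submission
  imports Defs
begin



fun okc :: "('a \<Rightarrow> 'a \<Rightarrow> bool) \<Rightarrow> ('a \<Rightarrow> nat set) \<Rightarrow> 'a list \<Rightarrow> bool" where
  "okc E L [] = True"
| "okc E L (x#xs) = (card {u \<in> set xs. E x u} < card (L x) \<and> okc E L xs)"

lemma okc_col:
  assumes "okc E L xs" "distinct xs" "\<forall>v\<in>set xs. finite (L v)" "\<forall>u v. E u v \<longrightarrow> E v u" "\<forall>v. \<not>E v v"
  shows "\<exists>c. (\<forall>v\<in>set xs. c v \<in> L v) \<and> (\<forall>u\<in>set xs. \<forall>v\<in>set xs. E u v \<longrightarrow> c u \<noteq> c v)"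
  using assms
proof (induction xs)
  case Nil show ?case by simp
next
  case (Cons x xs)
  then obtain c where c: "\<forall>v\<in>set xs. c v \<in> L v" "\<forall>u\<in>set xs. \<forall>v\<in>set xs. E u v \<longrightarrow> c u \<noteq> c v" by auto
  let ?N = "c ` {u \<in> set xs. E x u}"
  have "card ?N \<le> card {u \<in> set xs. E x u}" by (rule card_image_le) simp
  hence lt: "card ?N < card (L x)" using Cons.prems(1) by simp
  have "\<not> L x \<subseteq> ?N"
  proof
    assume "L x \<subseteq> ?N"
    hence "card (L x) \<le> card ?N" by (intro card_mono) auto
    thus False using lt by simp
  qed
  then obtain col where col: "col \<in> L x" "col \<notin> ?N" by blast
  have xn: "x \<notin> set xs" using Cons.prems(2) by simp
  define c' where "c' = c(x := col)"
  show ?case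
  proof (intro exI[of _ c'] conjI ballI impI)
    fix v assume "v \<in> set (x#xs)" thus "c' v \<in> L v" using c col unfolding c'_def by auto
  next
    fix u v assume u: "u \<in> set (x#xs)" and v: "v \<in> set (x#xs)" and e: "E u v"
    show "c' u \<noteq> c' v"
    proof (cases "u = x")
      case True
      show ?thesis
      proof (cases "v = x")
        case True thus ?thesis using \<open>u = x\<close> e Cons.prems(5) by auto
      next
        case False
        hence "v \<in> set xs" using v by simp
        hence "c v \<in> ?N" using e \<open>u = x\<close> by auto
        thus ?thesis using col \<open>u = x\<close> False unfolding c'_def by auto
      qed
    next
      case False
      hence us: "u \<in> set xs" using u by simp
      show ?thesis
      proof (cases "v = x")
        case True
        hence "E x u" using e Cons.prems(4) by blast
        hence "c u \<in> ?N" using us by auto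
        thus ?thesis using col True False unfolding c'_def by auto
      next
        case False2: False
        hence "v \<in> set xs" using v by simp
        thus ?thesis using c us e False False2 unfolding c'_def by auto
      qed
    qed
  qed
qed

fun okw :: "('a \<Rightarrow> 'a \<Rightarrow> bool) \<Rightarrow> ('a \<Rightarrow> int) \<Rightarrow> 'a list \<Rightarrow> 'a list \<Rightarrow> 'a list list \<Rightarrow> bool" where
  "okw E g pre [] wss = True"
| "okw E g pre (x#xs) [] = False"
| "okw E g pre (x#xs) (ws#wss) = (set ws \<subseteq> set pre \<and> distinct ws \<and> (\<forall>w\<in>set ws. E x w)
      \<and> g x \<le> int (length ws) \<and> okw E g (x#pre) xs wss)"

lemma okw_okc:
  assumes "okw E g pre ys wss" "distinct (pre @ ys @ zs)" "set pre \<union> set ys \<union> set zs = R"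
    "\<forall>v. \<not> E v v"
    "\<forall>x\<in>set ys. int (deg_in E R x) < g x + int (card (L x))"
    "okc E L zs"
  shows "okc E L (ys @ zs)"
  using assms
proof (induction ys arbitrary: pre wss)
  case Nil thus ?case by simp
next
  case (Cons x xs)
  then obtain ws wss' where wss: "wss = ws # wss'" by (cases wss) auto
  have ws: "set ws \<subseteq> set pre" "distinct ws" "\<forall>w\<in>set ws. E x w" "g x \<le> int (length ws)"
    and rest: "okw E g (x#pre) xs wss'" using Cons.prems(1) wss by auto
  have fin: "finite R" using Cons.prems(3) by auto
  let ?A = "{u \<in> set pre. E x u}" and ?T = "{u \<in> set (xs @ zs). E x u}"
  have split: "{u \<in> R. E x u} = ?A \<union> ?T" using Cons.prems(3,4) by auto
  have disj: "?A \<inter> ?T = {}" using Cons.prems(2) by auto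
  have "deg_in E R x = card ?A + card ?T" unfolding deg_in_def split
    by (rule card_Un_disjoint) (use disj in auto)
  moreover have "length ws \<le> card ?A"
  proof -
    have "set ws \<subseteq> ?A" using ws by auto
    hence "card (set ws) \<le> card ?A" by (intro card_mono) auto
    thus ?thesis using distinct_card[OF ws(2)] by simp
  qed
  moreover have "int (deg_in E R x) < g x + int (card (L x))" using Cons.prems(5) by simp
  ultimately have "card ?T < card (L x)" using ws(4) by linarith
  moreover have "okc E L (xs @ zs)"
    apply (rule Cons.IH[OF rest])
    using Cons.prems by auto
  ultimately show ?case by simp
qed

definition Pc :: "'a set \<Rightarrow> ('a \<Rightarrow> 'a \<Rightarrow> bool) \<Rightarrow> 'a set \<Rightarrow> 'a set \<Rightarrow> bool" where
  "Pc V E R I \<longleftrightarrow> (\<forall>L. is_assignment R (\<lambda>u. bfun V E R 4 u - (if u \<in> I then 1 else 0)) L \<longrightarrow> L_colorable E R L)"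

definition Pf :: "'a set \<Rightarrow> ('a \<Rightarrow> 'a \<Rightarrow> bool) \<Rightarrow> 'a set \<Rightarrow> 'a \<Rightarrow> bool" where
  "Pf V E R v \<longleftrightarrow> (\<forall>L. is_assignment R ((bfun V E R 4)(v := 1)) L \<longrightarrow> L_colorable E R L)"

lemma greedy_forb:
  assumes irr: "\<forall>v. \<not>E v v" and sym: "\<forall>u v. E u v \<longrightarrow> E v u"
    and ok: "okw E (\<lambda>u. int (deg V E u) - 3 + (if u \<in> I then 1 else 0)) [] xs wss"
    and d: "distinct xs" and s1: "set xs \<subseteq> R" and s2: "R \<subseteq> set xs"
  shows "Pc V E R I"
  unfolding Pc_def
proof (intro allI impI)
  fix L assume a: "is_assignment R (\<lambda>u. bfun V E R 4 u - (if u \<in> I then 1 else 0)) L"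
  have R: "set xs = R" using s1 s2 by auto
  have fin: "\<forall>v\<in>set xs. finite (L v)" using a R unfolding is_assignment_def by auto
  have bd: "\<forall>x\<in>set xs. int (deg_in E R x) < int (deg V E x) - 3 + (if x \<in> I then 1 else 0) + int (card (L x))"
  proof
    fix x assume x: "x \<in> set xs"
    hence "x \<in> R" using R by auto
    thus "int (deg_in E R x) < int (deg V E x) - 3 + (if x \<in> I then 1 else 0) + int (card (L x))"
      using a unfolding is_assignment_def bfun_def by force
  qed
  have "okc E L (xs @ [])"
    by (rule okw_okc[OF ok, where R = R]) (use d R irr bd in auto)
  hence "okc E L xs" by simp
  from okc_col[OF this d fin sym irr] obtain c where
    "(\<forall>v\<in>set xs. c v \<in> L v) \<and> (\<forall>u\<in>set xs. \<forall>v\<in>set xs. E u v \<longrightarrow> c u \<noteq> c v)" by blast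
  thus "L_colorable E R L" unfolding L_colorable_def R by blast
qed

lemma greedy_fix:
  assumes irr: "\<forall>v. \<not>E v v" and sym: "\<forall>u v. E u v \<longrightarrow> E v u"
    and ok: "okw E (\<lambda>u. int (deg V E u) - 3) [] ys wss"
    and d: "distinct (ys @ [v])" and s1: "set (ys @ [v]) \<subseteq> R" and s2: "R \<subseteq> set (ys @ [v])"
  shows "Pf V E R v"
  unfolding Pf_def
proof (intro allI impI)
  fix L assume a: "is_assignment R ((bfun V E R 4)(v := 1)) L"
  have R: "set (ys @ [v]) = R" using s1 s2 by auto
  have vR: "v \<in> R" using R by auto
  have "okc E L [v]" using a vR unfolding is_assignment_def by auto
  have "\<forall>x\<in>set ys. int (deg_in E R x) < int (deg V E x) - 3 + int (card (L x))"
  proof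
    fix x assume x: "x \<in> set ys"
    hence "x \<noteq> v" "x \<in> R" using d R by auto
    thus "int (deg_in E R x) < int (deg V E x) - 3 + int (card (L x))"
      using a unfolding is_assignment_def bfun_def by force
  qed
  have fin: "\<forall>u\<in>set (ys@[v]). finite (L u)" using a R unfolding is_assignment_def by auto
  have "okc E L (ys @ [v])"
    by (rule okw_okc[OF ok, where R = R]) (use d R irr \<open>okc E L [v]\<close> \<open>\<forall>x\<in>set ys. _\<close> in auto)
  from okc_col[OF this d fin sym irr] obtain c where
    "(\<forall>u\<in>set (ys@[v]). c u \<in> L u) \<and> (\<forall>u\<in>set (ys@[v]). \<forall>w\<in>set (ys@[v]). E u w \<longrightarrow> c u \<noteq> c w)" by blast
  thus "L_colorable E R L" unfolding L_colorable_def R by blast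
qed


lemma Pc_mono: "I \<subseteq> J \<Longrightarrow> Pc V E R J \<Longrightarrow> Pc V E R I"
  unfolding Pc_def is_assignment_def
proof (intro allI impI)
  fix L :: "_ \<Rightarrow> nat set" assume IJ: "I \<subseteq> J" and P: "\<forall>L. (\<forall>v\<in>R. finite (L v) \<and> bfun V E R 4 v - (if v \<in> J then 1 else 0) \<le> int (card (L v))) \<longrightarrow> L_colorable E R L"
    and L: "\<forall>v\<in>R. finite (L v) \<and> bfun V E R 4 v - (if v \<in> I then 1 else 0) \<le> int (card (L v))"
  have "\<forall>v\<in>R. finite (L v) \<and> bfun V E R 4 v - (if v \<in> J then 1 else 0) \<le> int (card (L v))"
  proof
    fix v assume "v \<in> R"
    thus "finite (L v) \<and> bfun V E R 4 v - (if v \<in> J then 1 else 0) \<le> int (card (L v))"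
      using L IJ by (cases "v \<in> I"; cases "v \<in> J") auto
  qed
  thus "L_colorable E R L" using P by blast
qed

lemma card_le2_cases:
  assumes "finite I" "card I \<le> 2"
  shows "I = {} \<or> (\<exists>a. I = {a}) \<or> (\<exists>a b. a \<noteq> b \<and> I = {a,b})"
proof -
  have "card I = 0 \<or> card I = 1 \<or> card I = 2" using assms(2) by auto
  thus ?thesis using assms(1) by (auto simp: card_1_singleton_iff card_2_iff)
qed


lemma br_intro:
  assumes "R \<noteq> {}" "R \<subseteq> S" "finite R" "\<forall>v\<in>R. Pf V E R v" "\<forall>a\<in>R. Pc V E R {a}"
    "\<forall>a\<in>R. \<forall>b\<in>R. a \<noteq> b \<longrightarrow> F_free_set E S {a,b} \<longrightarrow> Pc V E R {a,b}"
  shows "boundary_reducible V E S R 4"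
  unfolding boundary_reducible_def
proof (intro conjI allI impI ballI)
  show "R \<noteq> {}" "R \<subseteq> S" using assms(1,2) by auto
next
  fix v L assume "v \<in> R" "is_assignment R ((bfun V E R 4)(v := 1)) L"
  thus "L_colorable E R L" using assms(4) unfolding Pf_def by blast
next
  fix I L assume I: "I \<subseteq> R \<and> F_free_set E S I \<and> card I + 2 \<le> 4"
    and L: "is_assignment R (\<lambda>u. bfun V E R 4 u - (if u \<in> I then 1 else 0)) L"
  have IR: "I \<subseteq> R" and FI: "F_free_set E S I" and cI: "card I \<le> 2" using I by auto
  have fI: "finite I" using IR assms(3) finite_subset by blast
  have "Pc V E R I"
  proof -
    have "I = {} \<or> (\<exists>a. I = {a}) \<or> (\<exists>a b. a \<noteq> b \<and> I = {a,b})" by (rule card_le2_cases[OF fI cI])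
    moreover
    { assume e: "I = {}"
      obtain a where a: "a \<in> R" using assms(1) by blast
      have "Pc V E R {a}" using assms(5) a by blast
      hence "Pc V E R I" by (rule Pc_mono[rotated]) (simp add: e) }
    moreover
    { fix a assume e: "I = {a}"
      hence "a \<in> R" using IR by simp
      hence "Pc V E R I" using assms(5) e by blast }
    moreover
    { fix a b assume ab: "a \<noteq> b" and e: "I = {a,b}"
      hence "a \<in> R" "b \<in> R" using IR by auto
      hence "Pc V E R I" using assms(6) ab e FI by blast }
    ultimately show ?thesis by blast
  qed
  thus "L_colorable E R L" using L unfolding Pc_def by blast
qed

lemma all5: "(\<forall>i<(5::nat). P i) = (P 0 \<and> P 1 \<and> P 2 \<and> P 3 \<and> P 4)"
  by (simp add: numeral_eq_Suc All_less_Suc conj_comms)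
lemma all6: "(\<forall>i<(6::nat). P i) = (P 0 \<and> P 1 \<and> P 2 \<and> P 3 \<and> P 4 \<and> P 5)"
  by (simp add: numeral_eq_Suc All_less_Suc conj_comms)
lemma all7: "(\<forall>i<(7::nat). P i) = (P 0 \<and> P 1 \<and> P 2 \<and> P 3 \<and> P 4 \<and> P 5 \<and> P 6)"
  by (simp add: numeral_eq_Suc All_less_Suc conj_comms)

lemma cycI:
  assumes "distinct cs" "set cs \<subseteq> V" "length cs = k"
    "\<forall>i<k. E (cs!i) (cs!(Suc i mod k))"
  shows "has_cycle V E k"
  unfolding has_cycle_def
proof (intro exI[of _ "nth cs"] conjI)
  show "inj_on (nth cs) {..<k}" using assms by (auto intro: inj_on_nth)
  show "nth cs ` {..<k} \<subseteq> V" using assms by auto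
  show "\<forall>i<k. E (cs!i) (cs!(Suc i mod k))" by fact
qed

lemma cyc5I:
  assumes "distinct [a,b,c,d,e]" "{a,b,c,d,e} \<subseteq> V" "E a b" "E b c" "E c d" "E d e" "E e a"
  shows "has_cycle V E 5"
  by (rule cycI[of "[a,b,c,d,e]"]) (use assms in \<open>simp_all add: all5\<close>)
lemma cyc6I:
  assumes "distinct [a,b,c,d,e,f]" "{a,b,c,d,e,f} \<subseteq> V" "E a b" "E b c" "E c d" "E d e" "E e f" "E f a"
  shows "has_cycle V E 6"
  by (rule cycI[of "[a,b,c,d,e,f]"]) (use assms in \<open>simp_all add: all6\<close>)
lemma cyc7I:
  assumes "distinct [a,b,c,d,e,f,g]" "{a,b,c,d,e,f,g} \<subseteq> V" "E a b" "E b c" "E c d" "E d e" "E e f" "E f g" "E g a"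
  shows "has_cycle V E 7"
  by (rule cycI[of "[a,b,c,d,e,f,g]"]) (use assms in \<open>simp_all add: all7\<close>)

lemma b5I:
  assumes "distinct [x,y,a,b,c]" "{x,y,a,b,c} \<subseteq> V" "E x y" "E a x" "E a y" "E b x" "E b y" "E c x" "E c y"
  shows "has_B5 V E"
  unfolding has_B5_def
  apply (rule exI[of _ x], rule exI[of _ y], rule exI[of _ a], rule exI[of _ b], rule exI[of _ c])
  using assms by simp

lemma nff5: "has_cycle (insert None (Some ` S)) (ext_edge E S I) 5 \<Longrightarrow> \<not> F_free_set E S I"
  unfolding F_free_set_def F_free_def by blast
lemma nff6: "has_cycle (insert None (Some ` S)) (ext_edge E S I) 6 \<Longrightarrow> \<not> F_free_set E S I"
  unfolding F_free_set_def F_free_def by blast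
lemma nff7: "has_cycle (insert None (Some ` S)) (ext_edge E S I) 7 \<Longrightarrow> \<not> F_free_set E S I"
  unfolding F_free_set_def F_free_def by blast
lemma nffb: "has_B5 (insert None (Some ` S)) (ext_edge E S I) \<Longrightarrow> \<not> F_free_set E S I"
  unfolding F_free_set_def F_free_def by blast


lemma conf1:
  assumes gr: "graph V E" and h0: "(\<exists>v. v \<in> V \<and> deg V E v \<le> 2 \<and> S = {v} \<and> B = {})"
  shows "boundary_reducible V E S (S - B) 4"
proof -
  have irr: "\<forall>v. \<not>E v v" and sym: "\<forall>u v. E u v \<longrightarrow> E v u" using gr unfolding graph_def by auto
  from h0 obtain v where h: "v \<in> V" "deg V E v \<le> 2" "S = {v}" "B = {}" by blast
  have Re: "S - B = {v}" using h by auto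
  have fx: "Pf V E {v} v" by (rule greedy_fix[OF irr sym, where ys="[]" and wss="[]"]) simp_all
  have s: "Pc V E {v} {v}" by (rule greedy_forb[OF irr sym, where xs="[v]" and wss="[[]]"]) (use h in auto)
  show ?thesis unfolding Re
  proof (rule br_intro)
    show "{v} \<noteq> {}" "{v} \<subseteq> S" "finite {v}" using h by auto
    show "\<forall>vq\<in>{v}. Pf V E {v} vq" using fx by simp
    show "\<forall>aq\<in>{v}. Pc V E {v} {aq}" using s by simp
    show "\<forall>aq\<in>{v}. \<forall>bq\<in>{v}. aq \<noteq> bq \<longrightarrow> F_free_set E S {aq,bq} \<longrightarrow> Pc V E {v} {aq,bq}" by simp
  qed
qed

lemma conf2:
  assumes gr: "graph V E" and h0: "(\<exists>u v w. distinct [u,v,w] \<and> deg V E u = 3 \<and> deg V E v = 3 \<and> deg V E w = 3 \<and> E u v \<and> E v w \<and> S = {u,v,w} \<and> B = {})"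
  shows "boundary_reducible V E S (S - B) 4"
proof -
  have irr: "\<forall>v. \<not>E v v" and sym: "\<forall>u v. E u v \<longrightarrow> E v u" using gr unfolding graph_def by auto
  from h0 obtain u v w where h: "distinct [u,v,w]" "deg V E u = 3" "deg V E v = 3" "deg V E w = 3" "E u v" "E v w" "S = {u,v,w}" "B = {}" by blast
  have nq: "u \<noteq> v" "u \<noteq> w" "v \<noteq> u" "v \<noteq> w" "w \<noteq> u" "w \<noteq> v" using h unfolding dia_def by auto
  have ed: "E u v" "E v u" "E v w" "E w v" using h sym unfolding dia_def by auto
  have dg: "deg V E u = 3" "deg V E v = 3" "deg V E w = 3" using h by auto
  have Se: "S = {u,v,w}" and Be: "B = {}" using h by auto
  have Re: "S - B = {u,v,w}" using Se Be nq by auto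
  have fx_u: "Pf V E {u,v,w} u" by (rule greedy_fix[OF irr sym, where ys="[v,w]" and wss="[[],[v]]"]) (simp_all add: ed nq dg)
  have fx_v: "Pf V E {u,v,w} v" by (rule greedy_fix[OF irr sym, where ys="[u,w]" and wss="[[],[]]"]) (simp_all add: ed nq dg)
  have fx_w: "Pf V E {u,v,w} w" by (rule greedy_fix[OF irr sym, where ys="[u,v]" and wss="[[],[u]]"]) (simp_all add: ed nq dg)
  have p_u_v: "Pc V E {u,v,w} {u,v}" by (rule greedy_forb[OF irr sym, where xs="[w,v,u]" and wss="[[],[w],[v]]"]) (simp_all add: ed nq dg)
  have p_v_u: "Pc V E {u,v,w} {v,u}" by (subst insert_commute) (rule p_u_v)
  have p_u_w: "Pc V E {u,v,w} {u,w}" by (rule greedy_forb[OF irr sym, where xs="[v,u,w]" and wss="[[],[v],[v]]"]) (simp_all add: ed nq dg)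
  have p_w_u: "Pc V E {u,v,w} {w,u}" by (subst insert_commute) (rule p_u_w)
  have p_v_w: "Pc V E {u,v,w} {v,w}" by (rule greedy_forb[OF irr sym, where xs="[u,v,w]" and wss="[[],[u],[v]]"]) (simp_all add: ed nq dg)
  have p_w_v: "Pc V E {u,v,w} {w,v}" by (subst insert_commute) (rule p_v_w)
  have s_u: "Pc V E {u,v,w} {u}" by (rule Pc_mono[OF _ p_u_v]) simp
  have s_v: "Pc V E {u,v,w} {v}" by (rule Pc_mono[OF _ p_u_v]) simp
  have s_w: "Pc V E {u,v,w} {w}" by (rule Pc_mono[OF _ p_u_w]) simp
  show ?thesis unfolding Re
  proof (rule br_intro)
    show "{u,v,w} \<noteq> {}" by simp
    show "{u,v,w} \<subseteq> S" using Se by auto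
    show "finite {u,v,w}" by simp
    show "\<forall>vq\<in>{u,v,w}. Pf V E {u,v,w} vq" using fx_u fx_v fx_w by simp
    show "\<forall>aq\<in>{u,v,w}. Pc V E {u,v,w} {aq}" using s_u s_v s_w by simp
    show "\<forall>aq\<in>{u,v,w}. \<forall>bq\<in>{u,v,w}. aq \<noteq> bq \<longrightarrow> F_free_set E S {aq,bq} \<longrightarrow> Pc V E {u,v,w} {aq,bq}" by (simp add: nq p_u_v p_v_u p_u_w p_w_u p_v_w p_w_v)
  qed
qed

lemma conf3:
  assumes gr: "graph V E" and h0: "(\<exists>a b c. distinct [a,b,c] \<and> E a b \<and> E b c \<and> E a c \<and> deg V E a = 3 \<and> deg V E b = 3 \<and> deg V E c = 3 \<and> S = {a,b,c} \<and> B = {})"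
  shows "boundary_reducible V E S (S - B) 4"
proof -
  have irr: "\<forall>v. \<not>E v v" and sym: "\<forall>u v. E u v \<longrightarrow> E v u" using gr unfolding graph_def by auto
  from h0 obtain a b c where h: "distinct [a,b,c]" "E a b" "E b c" "E a c" "deg V E a = 3" "deg V E b = 3" "deg V E c = 3" "S = {a,b,c}" "B = {}" by blast
  have nq: "a \<noteq> b" "a \<noteq> c" "b \<noteq> a" "b \<noteq> c" "c \<noteq> a" "c \<noteq> b" using h unfolding dia_def by auto
  have ed: "E a b" "E b a" "E b c" "E c b" "E a c" "E c a" using h sym unfolding dia_def by auto
  have dg: "deg V E a = 3" "deg V E b = 3" "deg V E c = 3" using h by auto
  have Se: "S = {a,b,c}" and Be: "B = {}" using h by auto
  have Re: "S - B = {a,b,c}" using Se Be nq by auto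
  have fx_a: "Pf V E {a,b,c} a" by (rule greedy_fix[OF irr sym, where ys="[b,c]" and wss="[[],[b]]"]) (simp_all add: ed nq dg)
  have fx_b: "Pf V E {a,b,c} b" by (rule greedy_fix[OF irr sym, where ys="[a,c]" and wss="[[],[a]]"]) (simp_all add: ed nq dg)
  have fx_c: "Pf V E {a,b,c} c" by (rule greedy_fix[OF irr sym, where ys="[a,b]" and wss="[[],[a]]"]) (simp_all add: ed nq dg)
  have p_a_b: "Pc V E {a,b,c} {a,b}" by (rule greedy_forb[OF irr sym, where xs="[c,a,b]" and wss="[[],[c],[c,a]]"]) (simp_all add: ed nq dg)
  have p_b_a: "Pc V E {a,b,c} {b,a}" by (subst insert_commute) (rule p_a_b)
  have p_a_c: "Pc V E {a,b,c} {a,c}" by (rule greedy_forb[OF irr sym, where xs="[b,a,c]" and wss="[[],[b],[b,a]]"]) (simp_all add: ed nq dg)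
  have p_c_a: "Pc V E {a,b,c} {c,a}" by (subst insert_commute) (rule p_a_c)
  have p_b_c: "Pc V E {a,b,c} {b,c}" by (rule greedy_forb[OF irr sym, where xs="[a,b,c]" and wss="[[],[a],[a,b]]"]) (simp_all add: ed nq dg)
  have p_c_b: "Pc V E {a,b,c} {c,b}" by (subst insert_commute) (rule p_b_c)
  have s_a: "Pc V E {a,b,c} {a}" by (rule Pc_mono[OF _ p_a_b]) simp
  have s_b: "Pc V E {a,b,c} {b}" by (rule Pc_mono[OF _ p_a_b]) simp
  have s_c: "Pc V E {a,b,c} {c}" by (rule Pc_mono[OF _ p_a_c]) simp
  show ?thesis unfolding Re
  proof (rule br_intro)
    show "{a,b,c} \<noteq> {}" by simp
    show "{a,b,c} \<subseteq> S" using Se by auto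
    show "finite {a,b,c}" by simp
    show "\<forall>vq\<in>{a,b,c}. Pf V E {a,b,c} vq" using fx_a fx_b fx_c by simp
    show "\<forall>aq\<in>{a,b,c}. Pc V E {a,b,c} {aq}" using s_a s_b s_c by simp
    show "\<forall>aq\<in>{a,b,c}. \<forall>bq\<in>{a,b,c}. aq \<noteq> bq \<longrightarrow> F_free_set E S {aq,bq} \<longrightarrow> Pc V E {a,b,c} {aq,bq}" by (simp add: nq p_a_b p_b_a p_a_c p_c_a p_b_c p_c_b)
  qed
qed

lemma conf4:
  assumes gr: "graph V E" and h0: "(\<exists>m1 m2 s1 s2 u. dia E m1 m2 s1 s2 \<and> deg V E m1 = 4 \<and> deg V E m2 = 3 \<and> deg V E s1 = 4 \<and> deg V E s2 \<ge> 5 \<and> u \<notin> {m1,m2,s1,s2} \<and> deg V E u = 3 \<and> E u m1 \<and> S = {m1,m2,s1,s2,u} \<and> B = {s2})"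
  shows "boundary_reducible V E S (S - B) 4"
proof -
  have irr: "\<forall>v. \<not>E v v" and sym: "\<forall>u v. E u v \<longrightarrow> E v u" using gr unfolding graph_def by auto
  from h0 obtain m1 m2 s1 s2 u where h: "dia E m1 m2 s1 s2" "deg V E m1 = 4" "deg V E m2 = 3" "deg V E s1 = 4" "deg V E s2 \<ge> 5" "u \<notin> {m1,m2,s1,s2}" "deg V E u = 3" "E u m1" "S = {m1,m2,s1,s2,u}" "B = {s2}" by blast
  have nq: "m1 \<noteq> m2" "m1 \<noteq> s1" "m1 \<noteq> s2" "m1 \<noteq> u" "m2 \<noteq> m1" "m2 \<noteq> s1" "m2 \<noteq> s2" "m2 \<noteq> u" "s1 \<noteq> m1" "s1 \<noteq> m2" "s1 \<noteq> s2" "s1 \<noteq> u" "s2 \<noteq> m1" "s2 \<noteq> m2" "s2 \<noteq> s1" "s2 \<noteq> u" "u \<noteq> m1" "u \<noteq> m2" "u \<noteq> s1" "u \<noteq> s2" using h unfolding dia_def by auto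
  have ed: "E m1 m2" "E m2 m1" "E m1 s1" "E s1 m1" "E m2 s1" "E s1 m2" "E m1 s2" "E s2 m1" "E m2 s2" "E s2 m2" "E u m1" "E m1 u" using h sym unfolding dia_def by auto
  have dg: "deg V E m1 = 4" "deg V E m2 = 3" "deg V E s1 = 4" "deg V E u = 3" using h by auto
  have Se: "S = {m1,m2,s1,s2,u}" and Be: "B = {s2}" using h by auto
  have Re: "S - B = {m1,m2,s1,u}" using Se Be nq by auto
  have fx_m1: "Pf V E {m1,m2,s1,u} m1" by (rule greedy_fix[OF irr sym, where ys="[m2,s1,u]" and wss="[[],[m2],[]]"]) (simp_all add: ed nq dg)
  have fx_m2: "Pf V E {m1,m2,s1,u} m2" by (rule greedy_fix[OF irr sym, where ys="[u,m1,s1]" and wss="[[],[u],[m1]]"]) (simp_all add: ed nq dg)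
  have fx_s1: "Pf V E {m1,m2,s1,u} s1" by (rule greedy_fix[OF irr sym, where ys="[m2,m1,u]" and wss="[[],[m2],[m1]]"]) (simp_all add: ed nq dg)
  have fx_u: "Pf V E {m1,m2,s1,u} u" by (rule greedy_fix[OF irr sym, where ys="[m2,m1,s1]" and wss="[[],[m2],[m2,m1]]"]) (simp_all add: ed nq dg)
  have nf_m1_m2: "\<not> F_free_set E S {m1,m2}" by (rule nffb, rule b5I[of "Some m1" "Some m2" "Some s1" "Some s2" None]) (simp_all add: ext_edge_def Se ed nq)
  have nf_m2_m1: "\<not> F_free_set E S {m2,m1}" by (subst insert_commute) (rule nf_m1_m2)
  have nf_m1_s1: "\<not> F_free_set E S {m1,s1}" by (rule nff5, rule cyc5I[of "Some m1" "Some s2" "Some m2" "Some s1" None]) (simp_all add: ext_edge_def Se ed nq)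
  have nf_s1_m1: "\<not> F_free_set E S {s1,m1}" by (subst insert_commute) (rule nf_m1_s1)
  have p_m1_u: "Pc V E {m1,m2,s1,u} {m1,u}" by (rule greedy_forb[OF irr sym, where xs="[m2,s1,m1,u]" and wss="[[],[m2],[m2,s1],[m1]]"]) (simp_all add: ed nq dg)
  have p_u_m1: "Pc V E {m1,m2,s1,u} {u,m1}" by (subst insert_commute) (rule p_m1_u)
  have nf_m2_s1: "\<not> F_free_set E S {m2,s1}" by (rule nff5, rule cyc5I[of "Some m1" "Some s1" None "Some m2" "Some s2"]) (simp_all add: ext_edge_def Se ed nq)
  have nf_s1_m2: "\<not> F_free_set E S {s1,m2}" by (subst insert_commute) (rule nf_m2_s1)
  have nf_m2_u: "\<not> F_free_set E S {m2,u}" by (rule nff5, rule cyc5I[of "Some m1" "Some s1" "Some m2" None "Some u"]) (simp_all add: ext_edge_def Se ed nq)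
  have nf_u_m2: "\<not> F_free_set E S {u,m2}" by (subst insert_commute) (rule nf_m2_u)
  have nf_s1_u: "\<not> F_free_set E S {s1,u}" by (rule nff5, rule cyc5I[of "Some m1" "Some m2" "Some s1" None "Some u"]) (simp_all add: ext_edge_def Se ed nq)
  have nf_u_s1: "\<not> F_free_set E S {u,s1}" by (subst insert_commute) (rule nf_s1_u)
  have s_m1: "Pc V E {m1,m2,s1,u} {m1}" by (rule Pc_mono[OF _ p_m1_u]) simp
  have s_m2: "Pc V E {m1,m2,s1,u} {m2}" by (rule greedy_forb[OF irr sym, where xs="[u,m1,m2,s1]" and wss="[[],[u],[m1],[m1,m2]]"]) (simp_all add: ed nq dg)
  have s_s1: "Pc V E {m1,m2,s1,u} {s1}" by (rule greedy_forb[OF irr sym, where xs="[m2,m1,s1,u]" and wss="[[],[m2],[m2,m1],[m1]]"]) (simp_all add: ed nq dg)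
  have s_u: "Pc V E {m1,m2,s1,u} {u}" by (rule Pc_mono[OF _ p_m1_u]) simp
  show ?thesis unfolding Re
  proof (rule br_intro)
    show "{m1,m2,s1,u} \<noteq> {}" by simp
    show "{m1,m2,s1,u} \<subseteq> S" using Se by auto
    show "finite {m1,m2,s1,u}" by simp
    show "\<forall>vq\<in>{m1,m2,s1,u}. Pf V E {m1,m2,s1,u} vq" using fx_m1 fx_m2 fx_s1 fx_u by simp
    show "\<forall>aq\<in>{m1,m2,s1,u}. Pc V E {m1,m2,s1,u} {aq}" using s_m1 s_m2 s_s1 s_u by simp
    show "\<forall>aq\<in>{m1,m2,s1,u}. \<forall>bq\<in>{m1,m2,s1,u}. aq \<noteq> bq \<longrightarrow> F_free_set E S {aq,bq} \<longrightarrow> Pc V E {m1,m2,s1,u} {aq,bq}" by (simp add: nq nf_m1_m2 nf_m2_m1 nf_m1_s1 nf_s1_m1 p_m1_u p_u_m1 nf_m2_s1 nf_s1_m2 nf_m2_u nf_u_m2 nf_s1_u nf_u_s1)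
  qed
qed

lemma conf5:
  assumes gr: "graph V E" and h0: "(\<exists>m1 m2 s1 s2. dia E m1 m2 s1 s2 \<and> deg V E m1 = 3 \<and> deg V E m2 = 3 \<and> deg V E s1 \<ge> 5 \<and> deg V E s2 \<ge> 5 \<and> S = {m1,m2,s1,s2} \<and> B = {s1,s2})"
  shows "boundary_reducible V E S (S - B) 4"
proof -
  have irr: "\<forall>v. \<not>E v v" and sym: "\<forall>u v. E u v \<longrightarrow> E v u" using gr unfolding graph_def by auto
  from h0 obtain m1 m2 s1 s2 where h: "dia E m1 m2 s1 s2" "deg V E m1 = 3" "deg V E m2 = 3" "deg V E s1 \<ge> 5" "deg V E s2 \<ge> 5" "S = {m1,m2,s1,s2}" "B = {s1,s2}" by blast
  have nq: "m1 \<noteq> m2" "m1 \<noteq> s1" "m1 \<noteq> s2" "m2 \<noteq> m1" "m2 \<noteq> s1" "m2 \<noteq> s2" "s1 \<noteq> m1" "s1 \<noteq> m2" "s1 \<noteq> s2" "s2 \<noteq> m1" "s2 \<noteq> m2" "s2 \<noteq> s1" using h unfolding dia_def by auto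
  have ed: "E m1 m2" "E m2 m1" "E m1 s1" "E s1 m1" "E m2 s1" "E s1 m2" "E m1 s2" "E s2 m1" "E m2 s2" "E s2 m2" using h sym unfolding dia_def by auto
  have dg: "deg V E m1 = 3" "deg V E m2 = 3" using h by auto
  have Se: "S = {m1,m2,s1,s2}" and Be: "B = {s1,s2}" using h by auto
  have Re: "S - B = {m1,m2}" using Se Be nq by auto
  have fx_m1: "Pf V E {m1,m2} m1" by (rule greedy_fix[OF irr sym, where ys="[m2]" and wss="[[]]"]) (simp_all add: ed nq dg)
  have fx_m2: "Pf V E {m1,m2} m2" by (rule greedy_fix[OF irr sym, where ys="[m1]" and wss="[[]]"]) (simp_all add: ed nq dg)
  have nf_m1_m2: "\<not> F_free_set E S {m1,m2}" by (rule nffb, rule b5I[of "Some m1" "Some m2" "Some s1" "Some s2" None]) (simp_all add: ext_edge_def Se ed nq)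
  have nf_m2_m1: "\<not> F_free_set E S {m2,m1}" by (subst insert_commute) (rule nf_m1_m2)
  have s_m1: "Pc V E {m1,m2} {m1}" by (rule greedy_forb[OF irr sym, where xs="[m2,m1]" and wss="[[],[m2]]"]) (simp_all add: ed nq dg)
  have s_m2: "Pc V E {m1,m2} {m2}" by (rule greedy_forb[OF irr sym, where xs="[m1,m2]" and wss="[[],[m1]]"]) (simp_all add: ed nq dg)
  show ?thesis unfolding Re
  proof (rule br_intro)
    show "{m1,m2} \<noteq> {}" by simp
    show "{m1,m2} \<subseteq> S" using Se by auto
    show "finite {m1,m2}" by simp
    show "\<forall>vq\<in>{m1,m2}. Pf V E {m1,m2} vq" using fx_m1 fx_m2 by simp
    show "\<forall>aq\<in>{m1,m2}. Pc V E {m1,m2} {aq}" using s_m1 s_m2 by simp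
    show "\<forall>aq\<in>{m1,m2}. \<forall>bq\<in>{m1,m2}. aq \<noteq> bq \<longrightarrow> F_free_set E S {aq,bq} \<longrightarrow> Pc V E {m1,m2} {aq,bq}" by (simp add: nq nf_m1_m2 nf_m2_m1)
  qed
qed

lemma conf6:
  assumes gr: "graph V E" and h0: "(\<exists>m1 m2 s1 s2. dia E m1 m2 s1 s2 \<and> deg V E m1 = 3 \<and> deg V E m2 \<ge> 5 \<and> deg V E s1 = 3 \<and> deg V E s2 \<ge> 5 \<and> S = {m1,m2,s1,s2} \<and> B = {m2,s2})"
  shows "boundary_reducible V E S (S - B) 4"
proof -
  have irr: "\<forall>v. \<not>E v v" and sym: "\<forall>u v. E u v \<longrightarrow> E v u" using gr unfolding graph_def by auto
  from h0 obtain m1 m2 s1 s2 where h: "dia E m1 m2 s1 s2" "deg V E m1 = 3" "deg V E m2 \<ge> 5" "deg V E s1 = 3" "deg V E s2 \<ge> 5" "S = {m1,m2,s1,s2}" "B = {m2,s2}" by blast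
  have nq: "m1 \<noteq> m2" "m1 \<noteq> s1" "m1 \<noteq> s2" "m2 \<noteq> m1" "m2 \<noteq> s1" "m2 \<noteq> s2" "s1 \<noteq> m1" "s1 \<noteq> m2" "s1 \<noteq> s2" "s2 \<noteq> m1" "s2 \<noteq> m2" "s2 \<noteq> s1" using h unfolding dia_def by auto
  have ed: "E m1 m2" "E m2 m1" "E m1 s1" "E s1 m1" "E m2 s1" "E s1 m2" "E m1 s2" "E s2 m1" "E m2 s2" "E s2 m2" using h sym unfolding dia_def by auto
  have dg: "deg V E m1 = 3" "deg V E s1 = 3" using h by auto
  have Se: "S = {m1,m2,s1,s2}" and Be: "B = {m2,s2}" using h by auto
  have Re: "S - B = {m1,s1}" using Se Be nq by auto
  have fx_m1: "Pf V E {m1,s1} m1" by (rule greedy_fix[OF irr sym, where ys="[s1]" and wss="[[]]"]) (simp_all add: ed nq dg)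
  have fx_s1: "Pf V E {m1,s1} s1" by (rule greedy_fix[OF irr sym, where ys="[m1]" and wss="[[]]"]) (simp_all add: ed nq dg)
  have nf_m1_s1: "\<not> F_free_set E S {m1,s1}" by (rule nff5, rule cyc5I[of "Some m1" "Some s2" "Some m2" "Some s1" None]) (simp_all add: ext_edge_def Se ed nq)
  have nf_s1_m1: "\<not> F_free_set E S {s1,m1}" by (subst insert_commute) (rule nf_m1_s1)
  have s_m1: "Pc V E {m1,s1} {m1}" by (rule greedy_forb[OF irr sym, where xs="[s1,m1]" and wss="[[],[s1]]"]) (simp_all add: ed nq dg)
  have s_s1: "Pc V E {m1,s1} {s1}" by (rule greedy_forb[OF irr sym, where xs="[m1,s1]" and wss="[[],[m1]]"]) (simp_all add: ed nq dg)
  show ?thesis unfolding Re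
  proof (rule br_intro)
    show "{m1,s1} \<noteq> {}" by simp
    show "{m1,s1} \<subseteq> S" using Se by auto
    show "finite {m1,s1}" by simp
    show "\<forall>vq\<in>{m1,s1}. Pf V E {m1,s1} vq" using fx_m1 fx_s1 by simp
    show "\<forall>aq\<in>{m1,s1}. Pc V E {m1,s1} {aq}" using s_m1 s_s1 by simp
    show "\<forall>aq\<in>{m1,s1}. \<forall>bq\<in>{m1,s1}. aq \<noteq> bq \<longrightarrow> F_free_set E S {aq,bq} \<longrightarrow> Pc V E {m1,s1} {aq,bq}" by (simp add: nq nf_m1_s1 nf_s1_m1)
  qed
qed

lemma conf7:
  assumes gr: "graph V E" and h0: "(\<exists>m1 m2 s1 s2. dia E m1 m2 s1 s2 \<and> deg V E m1 = 5 \<and> deg V E m2 = 4 \<and> deg V E s1 = 3 \<and> deg V E s2 = 3 \<and> S = {m1,m2,s1,s2} \<and> B = {})"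
  shows "boundary_reducible V E S (S - B) 4"
proof -
  have irr: "\<forall>v. \<not>E v v" and sym: "\<forall>u v. E u v \<longrightarrow> E v u" using gr unfolding graph_def by auto
  from h0 obtain m1 m2 s1 s2 where h: "dia E m1 m2 s1 s2" "deg V E m1 = 5" "deg V E m2 = 4" "deg V E s1 = 3" "deg V E s2 = 3" "S = {m1,m2,s1,s2}" "B = {}" by blast
  have nq: "m1 \<noteq> m2" "m1 \<noteq> s1" "m1 \<noteq> s2" "m2 \<noteq> m1" "m2 \<noteq> s1" "m2 \<noteq> s2" "s1 \<noteq> m1" "s1 \<noteq> m2" "s1 \<noteq> s2" "s2 \<noteq> m1" "s2 \<noteq> m2" "s2 \<noteq> s1" using h unfolding dia_def by auto
  have ed: "E m1 m2" "E m2 m1" "E m1 s1" "E s1 m1" "E m2 s1" "E s1 m2" "E m1 s2" "E s2 m1" "E m2 s2" "E s2 m2" using h sym unfolding dia_def by auto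
  have dg: "deg V E m1 = 5" "deg V E m2 = 4" "deg V E s1 = 3" "deg V E s2 = 3" using h by auto
  have Se: "S = {m1,m2,s1,s2}" and Be: "B = {}" using h by auto
  have Re: "S - B = {m1,m2,s1,s2}" using Se Be nq by auto
  have fx_m1: "Pf V E {m1,m2,s1,s2} m1" by (rule greedy_fix[OF irr sym, where ys="[s1,m2,s2]" and wss="[[],[s1],[m2]]"]) (simp_all add: ed nq dg)
  have fx_m2: "Pf V E {m1,m2,s1,s2} m2" by (rule greedy_fix[OF irr sym, where ys="[s1,s2,m1]" and wss="[[],[],[s1,s2]]"]) (simp_all add: ed nq dg)
  have fx_s1: "Pf V E {m1,m2,s1,s2} s1" by (rule greedy_fix[OF irr sym, where ys="[s2,m2,m1]" and wss="[[],[s2],[s2,m2]]"]) (simp_all add: ed nq dg)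
  have fx_s2: "Pf V E {m1,m2,s1,s2} s2" by (rule greedy_fix[OF irr sym, where ys="[s1,m2,m1]" and wss="[[],[s1],[s1,m2]]"]) (simp_all add: ed nq dg)
  have nf_m1_m2: "\<not> F_free_set E S {m1,m2}" by (rule nffb, rule b5I[of "Some m1" "Some m2" "Some s1" "Some s2" None]) (simp_all add: ext_edge_def Se ed nq)
  have nf_m2_m1: "\<not> F_free_set E S {m2,m1}" by (subst insert_commute) (rule nf_m1_m2)
  have nf_m1_s1: "\<not> F_free_set E S {m1,s1}" by (rule nff5, rule cyc5I[of "Some m1" "Some s2" "Some m2" "Some s1" None]) (simp_all add: ext_edge_def Se ed nq)
  have nf_s1_m1: "\<not> F_free_set E S {s1,m1}" by (subst insert_commute) (rule nf_m1_s1)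
  have nf_m1_s2: "\<not> F_free_set E S {m1,s2}" by (rule nff5, rule cyc5I[of "Some m1" "Some s1" "Some m2" "Some s2" None]) (simp_all add: ext_edge_def Se ed nq)
  have nf_s2_m1: "\<not> F_free_set E S {s2,m1}" by (subst insert_commute) (rule nf_m1_s2)
  have nf_m2_s1: "\<not> F_free_set E S {m2,s1}" by (rule nff5, rule cyc5I[of "Some m1" "Some s1" None "Some m2" "Some s2"]) (simp_all add: ext_edge_def Se ed nq)
  have nf_s1_m2: "\<not> F_free_set E S {s1,m2}" by (subst insert_commute) (rule nf_m2_s1)
  have nf_m2_s2: "\<not> F_free_set E S {m2,s2}" by (rule nff5, rule cyc5I[of "Some m1" "Some s1" "Some m2" None "Some s2"]) (simp_all add: ext_edge_def Se ed nq)
  have nf_s2_m2: "\<not> F_free_set E S {s2,m2}" by (subst insert_commute) (rule nf_m2_s2)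
  have nf_s1_s2: "\<not> F_free_set E S {s1,s2}" by (rule nff5, rule cyc5I[of "Some m1" "Some m2" "Some s1" None "Some s2"]) (simp_all add: ext_edge_def Se ed nq)
  have nf_s2_s1: "\<not> F_free_set E S {s2,s1}" by (subst insert_commute) (rule nf_s1_s2)
  have s_m1: "Pc V E {m1,m2,s1,s2} {m1}" by (rule greedy_forb[OF irr sym, where xs="[s1,m2,s2,m1]" and wss="[[],[s1],[m2],[s1,m2,s2]]"]) (simp_all add: ed nq dg)
  have s_m2: "Pc V E {m1,m2,s1,s2} {m2}" by (rule greedy_forb[OF irr sym, where xs="[s1,s2,m1,m2]" and wss="[[],[],[s1,s2],[s1,s2,m1]]"]) (simp_all add: ed nq dg)
  have s_s1: "Pc V E {m1,m2,s1,s2} {s1}" by (rule greedy_forb[OF irr sym, where xs="[s2,m2,m1,s1]" and wss="[[],[s2],[s2,m2],[m2,m1]]"]) (simp_all add: ed nq dg)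
  have s_s2: "Pc V E {m1,m2,s1,s2} {s2}" by (rule greedy_forb[OF irr sym, where xs="[s1,m2,m1,s2]" and wss="[[],[s1],[s1,m2],[m2,m1]]"]) (simp_all add: ed nq dg)
  show ?thesis unfolding Re
  proof (rule br_intro)
    show "{m1,m2,s1,s2} \<noteq> {}" by simp
    show "{m1,m2,s1,s2} \<subseteq> S" using Se by auto
    show "finite {m1,m2,s1,s2}" by simp
    show "\<forall>vq\<in>{m1,m2,s1,s2}. Pf V E {m1,m2,s1,s2} vq" using fx_m1 fx_m2 fx_s1 fx_s2 by simp
    show "\<forall>aq\<in>{m1,m2,s1,s2}. Pc V E {m1,m2,s1,s2} {aq}" using s_m1 s_m2 s_s1 s_s2 by simp
    show "\<forall>aq\<in>{m1,m2,s1,s2}. \<forall>bq\<in>{m1,m2,s1,s2}. aq \<noteq> bq \<longrightarrow> F_free_set E S {aq,bq} \<longrightarrow> Pc V E {m1,m2,s1,s2} {aq,bq}" by (simp add: nq nf_m1_m2 nf_m2_m1 nf_m1_s1 nf_s1_m1 nf_m1_s2 nf_s2_m1 nf_m2_s1 nf_s1_m2 nf_m2_s2 nf_s2_m2 nf_s1_s2 nf_s2_s1)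
  qed
qed

lemma conf8:
  assumes gr: "graph V E" and h0: "(\<exists>a1 a2 q t b s v. distinct [a1,a2,q,t,b,s,v] \<and> dia E a1 a2 q t \<and> deg V E a1 = 4 \<and> deg V E a2 = 4 \<and> deg V E q = 5 \<and> deg V E t = 3 \<and> dia E q b s v \<and> deg V E b = 3 \<and> deg V E s = 4 \<and> deg V E v \<ge> 4 \<and> S = {a1,a2,q,t,b,s,v} \<and> B = {v})"
  shows "boundary_reducible V E S (S - B) 4"
proof -
  have irr: "\<forall>v. \<not>E v v" and sym: "\<forall>u v. E u v \<longrightarrow> E v u" using gr unfolding graph_def by auto
  from h0 obtain a1 a2 q t b s v where h: "distinct [a1,a2,q,t,b,s,v]" "dia E a1 a2 q t" "deg V E a1 = 4" "deg V E a2 = 4" "deg V E q = 5" "deg V E t = 3" "dia E q b s v" "deg V E b = 3" "deg V E s = 4" "deg V E v \<ge> 4" "S = {a1,a2,q,t,b,s,v}" "B = {v}" by blast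
  have nq: "a1 \<noteq> a2" "a1 \<noteq> q" "a1 \<noteq> t" "a1 \<noteq> b" "a1 \<noteq> s" "a1 \<noteq> v" "a2 \<noteq> a1" "a2 \<noteq> q" "a2 \<noteq> t" "a2 \<noteq> b" "a2 \<noteq> s" "a2 \<noteq> v" "q \<noteq> a1" "q \<noteq> a2" "q \<noteq> t" "q \<noteq> b" "q \<noteq> s" "q \<noteq> v" "t \<noteq> a1" "t \<noteq> a2" "t \<noteq> q" "t \<noteq> b" "t \<noteq> s" "t \<noteq> v" "b \<noteq> a1" "b \<noteq> a2" "b \<noteq> q" "b \<noteq> t" "b \<noteq> s" "b \<noteq> v" "s \<noteq> a1" "s \<noteq> a2" "s \<noteq> q" "s \<noteq> t" "s \<noteq> b" "s \<noteq> v" "v \<noteq> a1" "v \<noteq> a2" "v \<noteq> q" "v \<noteq> t" "v \<noteq> b" "v \<noteq> s" using h unfolding dia_def by auto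
  have ed: "E a1 a2" "E a2 a1" "E a1 q" "E q a1" "E a2 q" "E q a2" "E a1 t" "E t a1" "E a2 t" "E t a2" "E q b" "E b q" "E q s" "E s q" "E b s" "E s b" "E q v" "E v q" "E b v" "E v b" using h sym unfolding dia_def by auto
  have dg: "deg V E a1 = 4" "deg V E a2 = 4" "deg V E q = 5" "deg V E t = 3" "deg V E b = 3" "deg V E s = 4" using h by auto
  have Se: "S = {a1,a2,q,t,b,s,v}" and Be: "B = {v}" using h by auto
  have Re: "S - B = {a1,a2,q,t,b,s}" using Se Be nq by auto
  have fx_a1: "Pf V E {a1,a2,q,t,b,s} a1" by (rule greedy_fix[OF irr sym, where ys="[b,s,q,a2,t]" and wss="[[],[b],[b,s],[q],[a2]]"]) (simp_all add: ed nq dg)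
  have fx_a2: "Pf V E {a1,a2,q,t,b,s} a2" by (rule greedy_fix[OF irr sym, where ys="[b,s,q,a1,t]" and wss="[[],[b],[b,s],[q],[a1]]"]) (simp_all add: ed nq dg)
  have fx_q: "Pf V E {a1,a2,q,t,b,s} q" by (rule greedy_fix[OF irr sym, where ys="[b,s,t,a1,a2]" and wss="[[],[b],[],[t],[t,a1]]"]) (simp_all add: ed nq dg)
  have fx_t: "Pf V E {a1,a2,q,t,b,s} t" by (rule greedy_fix[OF irr sym, where ys="[b,s,q,a1,a2]" and wss="[[],[b],[b,s],[q],[q,a1]]"]) (simp_all add: ed nq dg)
  have fx_b: "Pf V E {a1,a2,q,t,b,s} b" by (rule greedy_fix[OF irr sym, where ys="[t,a1,a2,q,s]" and wss="[[],[t],[t,a1],[a1,a2],[q]]"]) (simp_all add: ed nq dg)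
  have fx_s: "Pf V E {a1,a2,q,t,b,s} s" by (rule greedy_fix[OF irr sym, where ys="[b,t,a1,a2,q]" and wss="[[],[],[t],[t,a1],[b,a1,a2]]"]) (simp_all add: ed nq dg)
  have nf_a1_a2: "\<not> F_free_set E S {a1,a2}" by (rule nffb, rule b5I[of "Some a1" "Some a2" "Some q" "Some t" None]) (simp_all add: ext_edge_def Se ed nq)
  have nf_a2_a1: "\<not> F_free_set E S {a2,a1}" by (subst insert_commute) (rule nf_a1_a2)
  have nf_a1_q: "\<not> F_free_set E S {a1,q}" by (rule nff5, rule cyc5I[of "Some a1" "Some t" "Some a2" "Some q" None]) (simp_all add: ext_edge_def Se ed nq)
  have nf_q_a1: "\<not> F_free_set E S {q,a1}" by (subst insert_commute) (rule nf_a1_q)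
  have nf_a1_t: "\<not> F_free_set E S {a1,t}" by (rule nff5, rule cyc5I[of "Some a1" "Some q" "Some a2" "Some t" None]) (simp_all add: ext_edge_def Se ed nq)
  have nf_t_a1: "\<not> F_free_set E S {t,a1}" by (subst insert_commute) (rule nf_a1_t)
  have nf_a1_b: "\<not> F_free_set E S {a1,b}" by (rule nff5, rule cyc5I[of "Some a1" "Some a2" "Some q" "Some b" None]) (simp_all add: ext_edge_def Se ed nq)
  have nf_b_a1: "\<not> F_free_set E S {b,a1}" by (subst insert_commute) (rule nf_a1_b)
  have nf_a1_s: "\<not> F_free_set E S {a1,s}" by (rule nff5, rule cyc5I[of "Some a1" "Some a2" "Some q" "Some s" None]) (simp_all add: ext_edge_def Se ed nq)
  have nf_s_a1: "\<not> F_free_set E S {s,a1}" by (subst insert_commute) (rule nf_a1_s)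
  have nf_a2_q: "\<not> F_free_set E S {a2,q}" by (rule nff5, rule cyc5I[of "Some a1" "Some q" None "Some a2" "Some t"]) (simp_all add: ext_edge_def Se ed nq)
  have nf_q_a2: "\<not> F_free_set E S {q,a2}" by (subst insert_commute) (rule nf_a2_q)
  have nf_a2_t: "\<not> F_free_set E S {a2,t}" by (rule nff5, rule cyc5I[of "Some a1" "Some q" "Some a2" None "Some t"]) (simp_all add: ext_edge_def Se ed nq)
  have nf_t_a2: "\<not> F_free_set E S {t,a2}" by (subst insert_commute) (rule nf_a2_t)
  have nf_a2_b: "\<not> F_free_set E S {a2,b}" by (rule nff5, rule cyc5I[of "Some a1" "Some a2" None "Some b" "Some q"]) (simp_all add: ext_edge_def Se ed nq)
  have nf_b_a2: "\<not> F_free_set E S {b,a2}" by (subst insert_commute) (rule nf_a2_b)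
  have nf_a2_s: "\<not> F_free_set E S {a2,s}" by (rule nff5, rule cyc5I[of "Some a1" "Some a2" None "Some s" "Some q"]) (simp_all add: ext_edge_def Se ed nq)
  have nf_s_a2: "\<not> F_free_set E S {s,a2}" by (subst insert_commute) (rule nf_a2_s)
  have nf_q_t: "\<not> F_free_set E S {q,t}" by (rule nff5, rule cyc5I[of "Some a1" "Some a2" "Some q" None "Some t"]) (simp_all add: ext_edge_def Se ed nq)
  have nf_t_q: "\<not> F_free_set E S {t,q}" by (subst insert_commute) (rule nf_q_t)
  have nf_q_b: "\<not> F_free_set E S {q,b}" by (rule nffb, rule b5I[of "Some q" "Some b" "Some s" "Some v" None]) (simp_all add: ext_edge_def Se ed nq)
  have nf_b_q: "\<not> F_free_set E S {b,q}" by (subst insert_commute) (rule nf_q_b)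
  have nf_q_s: "\<not> F_free_set E S {q,s}" by (rule nff5, rule cyc5I[of "Some b" "Some s" None "Some q" "Some v"]) (simp_all add: ext_edge_def Se ed nq)
  have nf_s_q: "\<not> F_free_set E S {s,q}" by (subst insert_commute) (rule nf_q_s)
  have nf_t_b: "\<not> F_free_set E S {t,b}" by (rule nff5, rule cyc5I[of "Some a1" "Some q" "Some b" None "Some t"]) (simp_all add: ext_edge_def Se ed nq)
  have nf_b_t: "\<not> F_free_set E S {b,t}" by (subst insert_commute) (rule nf_t_b)
  have nf_t_s: "\<not> F_free_set E S {t,s}" by (rule nff5, rule cyc5I[of "Some a1" "Some q" "Some s" None "Some t"]) (simp_all add: ext_edge_def Se ed nq)
  have nf_s_t: "\<not> F_free_set E S {s,t}" by (subst insert_commute) (rule nf_t_s)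
  have nf_b_s: "\<not> F_free_set E S {b,s}" by (rule nff5, rule cyc5I[of "Some b" "Some v" "Some q" "Some s" None]) (simp_all add: ext_edge_def Se ed nq)
  have nf_s_b: "\<not> F_free_set E S {s,b}" by (subst insert_commute) (rule nf_b_s)
  have s_a1: "Pc V E {a1,a2,q,t,b,s} {a1}" by (rule greedy_forb[OF irr sym, where xs="[b,s,q,a2,a1,t]" and wss="[[],[b],[b,s],[q],[q,a2],[a2,a1]]"]) (simp_all add: ed nq dg)
  have s_a2: "Pc V E {a1,a2,q,t,b,s} {a2}" by (rule greedy_forb[OF irr sym, where xs="[b,s,q,a1,a2,t]" and wss="[[],[b],[b,s],[q],[q,a1],[a1,a2]]"]) (simp_all add: ed nq dg)
  have s_q: "Pc V E {a1,a2,q,t,b,s} {q}" by (rule greedy_forb[OF irr sym, where xs="[b,s,t,a1,a2,q]" and wss="[[],[b],[],[t],[t,a1],[b,s,a1,a2]]"]) (simp_all add: ed nq dg)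
  have s_t: "Pc V E {a1,a2,q,t,b,s} {t}" by (rule greedy_forb[OF irr sym, where xs="[b,s,q,a1,a2,t]" and wss="[[],[b],[b,s],[q],[q,a1],[a1,a2]]"]) (simp_all add: ed nq dg)
  have s_b: "Pc V E {a1,a2,q,t,b,s} {b}" by (rule greedy_forb[OF irr sym, where xs="[t,a1,a2,q,b,s]" and wss="[[],[t],[t,a1],[a1,a2],[q],[q,b]]"]) (simp_all add: ed nq dg)
  have s_s: "Pc V E {a1,a2,q,t,b,s} {s}" by (rule greedy_forb[OF irr sym, where xs="[b,t,a1,a2,q,s]" and wss="[[],[],[t],[t,a1],[b,a1,a2],[b,q]]"]) (simp_all add: ed nq dg)
  show ?thesis unfolding Re
  proof (rule br_intro)
    show "{a1,a2,q,t,b,s} \<noteq> {}" by simp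
    show "{a1,a2,q,t,b,s} \<subseteq> S" using Se by auto
    show "finite {a1,a2,q,t,b,s}" by simp
    show "\<forall>vq\<in>{a1,a2,q,t,b,s}. Pf V E {a1,a2,q,t,b,s} vq" using fx_a1 fx_a2 fx_q fx_t fx_b fx_s by simp
    show "\<forall>aq\<in>{a1,a2,q,t,b,s}. Pc V E {a1,a2,q,t,b,s} {aq}" using s_a1 s_a2 s_q s_t s_b s_s by simp
    show "\<forall>aq\<in>{a1,a2,q,t,b,s}. \<forall>bq\<in>{a1,a2,q,t,b,s}. aq \<noteq> bq \<longrightarrow> F_free_set E S {aq,bq} \<longrightarrow> Pc V E {a1,a2,q,t,b,s} {aq,bq}" by (simp add: nq nf_a1_a2 nf_a2_a1 nf_a1_q nf_q_a1 nf_a1_t nf_t_a1 nf_a1_b nf_b_a1 nf_a1_s nf_s_a1 nf_a2_q nf_q_a2 nf_a2_t nf_t_a2 nf_a2_b nf_b_a2 nf_a2_s nf_s_a2 nf_q_t nf_t_q nf_q_b nf_b_q nf_q_s nf_s_q nf_t_b nf_b_t nf_t_s nf_s_t nf_b_s nf_s_b)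
  qed
qed

lemma conf9:
  assumes gr: "graph V E" and h0: "(\<exists>x1 y1 z1 w1 x2 y2 z2 w2. distinct [x1,y1,z1,w1,x2,y2,z2,w2] \<and> dia E x1 y1 z1 w1 \<and> deg V E x1 = 3 \<and> deg V E y1 = 4 \<and> deg V E z1 = 4 \<and> deg V E w1 \<ge> 5 \<and> dia E x2 y2 z2 w2 \<and> deg V E x2 = 3 \<and> deg V E y2 = 4 \<and> deg V E z2 = 4 \<and> deg V E w2 \<ge> 5 \<and> E y1 y2 \<and> S = {x1,y1,z1,w1,x2,y2,z2,w2} \<and> B = {w1,w2})"
  shows "boundary_reducible V E S (S - B) 4"
proof -
  have irr: "\<forall>v. \<not>E v v" and sym: "\<forall>u v. E u v \<longrightarrow> E v u" using gr unfolding graph_def by auto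
  from h0 obtain x1 y1 z1 w1 x2 y2 z2 w2 where h: "distinct [x1,y1,z1,w1,x2,y2,z2,w2]" "dia E x1 y1 z1 w1" "deg V E x1 = 3" "deg V E y1 = 4" "deg V E z1 = 4" "deg V E w1 \<ge> 5" "dia E x2 y2 z2 w2" "deg V E x2 = 3" "deg V E y2 = 4" "deg V E z2 = 4" "deg V E w2 \<ge> 5" "E y1 y2" "S = {x1,y1,z1,w1,x2,y2,z2,w2}" "B = {w1,w2}" by blast
  have nq: "x1 \<noteq> y1" "x1 \<noteq> z1" "x1 \<noteq> w1" "x1 \<noteq> x2" "x1 \<noteq> y2" "x1 \<noteq> z2" "x1 \<noteq> w2" "y1 \<noteq> x1" "y1 \<noteq> z1" "y1 \<noteq> w1" "y1 \<noteq> x2" "y1 \<noteq> y2" "y1 \<noteq> z2" "y1 \<noteq> w2" "z1 \<noteq> x1" "z1 \<noteq> y1" "z1 \<noteq> w1" "z1 \<noteq> x2" "z1 \<noteq> y2" "z1 \<noteq> z2" "z1 \<noteq> w2" "w1 \<noteq> x1" "w1 \<noteq> y1" "w1 \<noteq> z1" "w1 \<noteq> x2" "w1 \<noteq> y2" "w1 \<noteq> z2" "w1 \<noteq> w2" "x2 \<noteq> x1" "x2 \<noteq> y1" "x2 \<noteq> z1" "x2 \<noteq> w1" "x2 \<noteq> y2" "x2 \<noteq> z2" "x2 \<noteq> w2" "y2 \<noteq> x1" "y2 \<noteq> y1" "y2 \<noteq> z1" "y2 \<noteq> w1" "y2 \<noteq> x2" "y2 \<noteq> z2" "y2 \<noteq>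 w2" "z2 \<noteq> x1" "z2 \<noteq> y1" "z2 \<noteq> z1" "z2 \<noteq> w1" "z2 \<noteq> x2" "z2 \<noteq> y2" "z2 \<noteq> w2" "w2 \<noteq> x1" "w2 \<noteq> y1" "w2 \<noteq> z1" "w2 \<noteq> w1" "w2 \<noteq> x2" "w2 \<noteq> y2" "w2 \<noteq> z2" using h unfolding dia_def by auto
  have ed: "E x1 y1" "E y1 x1" "E x1 z1" "E z1 x1" "E y1 z1" "E z1 y1" "E x1 w1" "E w1 x1" "E y1 w1" "E w1 y1" "E x2 y2" "E y2 x2" "E x2 z2" "E z2 x2" "E y2 z2" "E z2 y2" "E x2 w2" "E w2 x2" "E y2 w2" "E w2 y2" "E y1 y2" "E y2 y1" using h sym unfolding dia_def by auto
  have dg: "deg V E x1 = 3" "deg V E y1 = 4" "deg V E z1 = 4" "deg V E x2 = 3" "deg V E y2 = 4" "deg V E z2 = 4" using h by auto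
  have Se: "S = {x1,y1,z1,w1,x2,y2,z2,w2}" and Be: "B = {w1,w2}" using h by auto
  have Re: "S - B = {x1,y1,z1,x2,y2,z2}" using Se Be nq by auto
  have fx_x1: "Pf V E {x1,y1,z1,x2,y2,z2} x1" by (rule greedy_fix[OF irr sym, where ys="[x2,y2,y1,z1,z2]" and wss="[[],[x2],[y2],[y1],[x2,y2]]"]) (simp_all add: ed nq dg)
  have fx_y1: "Pf V E {x1,y1,z1,x2,y2,z2} y1" by (rule greedy_fix[OF irr sym, where ys="[x1,x2,y2,z1,z2]" and wss="[[],[],[x2],[x1],[x2,y2]]"]) (simp_all add: ed nq dg)
  have fx_z1: "Pf V E {x1,y1,z1,x2,y2,z2} z1" by (rule greedy_fix[OF irr sym, where ys="[x1,x2,y1,y2,z2]" and wss="[[],[],[x1],[x2,y1],[x2,y2]]"]) (simp_all add: ed nq dg)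
  have fx_x2: "Pf V E {x1,y1,z1,x2,y2,z2} x2" by (rule greedy_fix[OF irr sym, where ys="[x1,y1,y2,z1,z2]" and wss="[[],[x1],[y1],[x1,y1],[y2]]"]) (simp_all add: ed nq dg)
  have fx_y2: "Pf V E {x1,y1,z1,x2,y2,z2} y2" by (rule greedy_fix[OF irr sym, where ys="[x1,x2,y1,z1,z2]" and wss="[[],[],[x1],[x1,y1],[x2]]"]) (simp_all add: ed nq dg)
  have fx_z2: "Pf V E {x1,y1,z1,x2,y2,z2} z2" by (rule greedy_fix[OF irr sym, where ys="[x1,x2,y1,y2,z1]" and wss="[[],[],[x1],[x2,y1],[x1,y1]]"]) (simp_all add: ed nq dg)
  have nf_x1_y1: "\<not> F_free_set E S {x1,y1}" by (rule nffb, rule b5I[of "Some x1" "Some y1" "Some w1" None "Some z1"]) (simp_all add: ext_edge_def Se ed nq)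
  have nf_y1_x1: "\<not> F_free_set E S {y1,x1}" by (subst insert_commute) (rule nf_x1_y1)
  have nf_x1_z1: "\<not> F_free_set E S {x1,z1}" by (rule nff5, rule cyc5I[of "Some w1" "Some x1" None "Some z1" "Some y1"]) (simp_all add: ext_edge_def Se ed nq)
  have nf_z1_x1: "\<not> F_free_set E S {z1,x1}" by (subst insert_commute) (rule nf_x1_z1)
  have nf_x1_x2: "\<not> F_free_set E S {x1,x2}" by (rule nff5, rule cyc5I[of "Some x1" "Some y1" "Some y2" "Some x2" None]) (simp_all add: ext_edge_def Se ed nq)
  have nf_x2_x1: "\<not> F_free_set E S {x2,x1}" by (subst insert_commute) (rule nf_x1_x2)
  have nf_x1_y2: "\<not> F_free_set E S {x1,y2}" by (rule nff5, rule cyc5I[of "Some w1" "Some x1" None "Some y2" "Some y1"]) (simp_all add: ext_edge_def Se ed nq)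
  have nf_y2_x1: "\<not> F_free_set E S {y2,x1}" by (subst insert_commute) (rule nf_x1_y2)
  have nf_x1_z2: "\<not> F_free_set E S {x1,z2}" by (rule nff5, rule cyc5I[of "Some x1" "Some y1" "Some y2" "Some z2" None]) (simp_all add: ext_edge_def Se ed nq)
  have nf_z2_x1: "\<not> F_free_set E S {z2,x1}" by (subst insert_commute) (rule nf_x1_z2)
  have nf_y1_z1: "\<not> F_free_set E S {y1,z1}" by (rule nff5, rule cyc5I[of "Some w1" "Some x1" "Some z1" None "Some y1"]) (simp_all add: ext_edge_def Se ed nq)
  have nf_z1_y1: "\<not> F_free_set E S {z1,y1}" by (subst insert_commute) (rule nf_y1_z1)
  have nf_y1_x2: "\<not> F_free_set E S {y1,x2}" by (rule nff5, rule cyc5I[of "Some w2" "Some x2" None "Some y1" "Some y2"]) (simp_all add: ext_edge_def Se ed nq)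
  have nf_x2_y1: "\<not> F_free_set E S {x2,y1}" by (subst insert_commute) (rule nf_y1_x2)
  have p_y1_y2: "Pc V E {x1,y1,z1,x2,y2,z2} {y1,y2}" by (rule greedy_forb[OF irr sym, where xs="[x1,x2,z1,y1,y2,z2]" and wss="[[],[],[x1],[x1,z1],[x2,y1],[x2,y2]]"]) (simp_all add: ed nq dg)
  have p_y2_y1: "Pc V E {x1,y1,z1,x2,y2,z2} {y2,y1}" by (subst insert_commute) (rule p_y1_y2)
  have nf_y1_z2: "\<not> F_free_set E S {y1,z2}" by (rule nff5, rule cyc5I[of "Some x2" "Some y2" "Some y1" None "Some z2"]) (simp_all add: ext_edge_def Se ed nq)
  have nf_z2_y1: "\<not> F_free_set E S {z2,y1}" by (subst insert_commute) (rule nf_y1_z2)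
  have nf_z1_x2: "\<not> F_free_set E S {z1,x2}" by (rule nff5, rule cyc5I[of "Some x2" "Some y2" "Some y1" "Some z1" None]) (simp_all add: ext_edge_def Se ed nq)
  have nf_x2_z1: "\<not> F_free_set E S {x2,z1}" by (subst insert_commute) (rule nf_z1_x2)
  have nf_z1_y2: "\<not> F_free_set E S {z1,y2}" by (rule nff5, rule cyc5I[of "Some x1" "Some y1" "Some y2" None "Some z1"]) (simp_all add: ext_edge_def Se ed nq)
  have nf_y2_z1: "\<not> F_free_set E S {y2,z1}" by (subst insert_commute) (rule nf_z1_y2)
  have nf_z1_z2: "\<not> F_free_set E S {z1,z2}" by (rule nff5, rule cyc5I[of "Some y1" "Some y2" "Some z2" None "Some z1"]) (simp_all add: ext_edge_def Se ed nq)
  have nf_z2_z1: "\<not> F_free_set E S {z2,z1}" by (subst insert_commute) (rule nf_z1_z2)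
  have nf_x2_y2: "\<not> F_free_set E S {x2,y2}" by (rule nffb, rule b5I[of "Some x2" "Some y2" "Some w2" None "Some z2"]) (simp_all add: ext_edge_def Se ed nq)
  have nf_y2_x2: "\<not> F_free_set E S {y2,x2}" by (subst insert_commute) (rule nf_x2_y2)
  have nf_x2_z2: "\<not> F_free_set E S {x2,z2}" by (rule nff5, rule cyc5I[of "Some w2" "Some x2" None "Some z2" "Some y2"]) (simp_all add: ext_edge_def Se ed nq)
  have nf_z2_x2: "\<not> F_free_set E S {z2,x2}" by (subst insert_commute) (rule nf_x2_z2)
  have nf_y2_z2: "\<not> F_free_set E S {y2,z2}" by (rule nff5, rule cyc5I[of "Some w2" "Some x2" "Some z2" None "Some y2"]) (simp_all add: ext_edge_def Se ed nq)
  have nf_z2_y2: "\<not> F_free_set E S {z2,y2}" by (subst insert_commute) (rule nf_y2_z2)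
  have s_x1: "Pc V E {x1,y1,z1,x2,y2,z2} {x1}" by (rule greedy_forb[OF irr sym, where xs="[x2,y2,y1,x1,z1,z2]" and wss="[[],[x2],[y2],[y1],[y1,x1],[x2,y2]]"]) (simp_all add: ed nq dg)
  have s_y1: "Pc V E {x1,y1,z1,x2,y2,z2} {y1}" by (rule Pc_mono[OF _ p_y1_y2]) simp
  have s_z1: "Pc V E {x1,y1,z1,x2,y2,z2} {z1}" by (rule greedy_forb[OF irr sym, where xs="[x1,x2,y1,y2,z1,z2]" and wss="[[],[],[x1],[x2,y1],[x1,y1],[x2,y2]]"]) (simp_all add: ed nq dg)
  have s_x2: "Pc V E {x1,y1,z1,x2,y2,z2} {x2}" by (rule greedy_forb[OF irr sym, where xs="[x1,y1,y2,x2,z1,z2]" and wss="[[],[x1],[y1],[y2],[x1,y1],[y2,x2]]"]) (simp_all add: ed nq dg)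
  have s_y2: "Pc V E {x1,y1,z1,x2,y2,z2} {y2}" by (rule Pc_mono[OF _ p_y1_y2]) simp
  have s_z2: "Pc V E {x1,y1,z1,x2,y2,z2} {z2}" by (rule greedy_forb[OF irr sym, where xs="[x1,x2,y1,y2,z1,z2]" and wss="[[],[],[x1],[x2,y1],[x1,y1],[x2,y2]]"]) (simp_all add: ed nq dg)
  show ?thesis unfolding Re
  proof (rule br_intro)
    show "{x1,y1,z1,x2,y2,z2} \<noteq> {}" by simp
    show "{x1,y1,z1,x2,y2,z2} \<subseteq> S" using Se by auto
    show "finite {x1,y1,z1,x2,y2,z2}" by simp
    show "\<forall>vq\<in>{x1,y1,z1,x2,y2,z2}. Pf V E {x1,y1,z1,x2,y2,z2} vq" using fx_x1 fx_y1 fx_z1 fx_x2 fx_y2 fx_z2 by simp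
    show "\<forall>aq\<in>{x1,y1,z1,x2,y2,z2}. Pc V E {x1,y1,z1,x2,y2,z2} {aq}" using s_x1 s_y1 s_z1 s_x2 s_y2 s_z2 by simp
    show "\<forall>aq\<in>{x1,y1,z1,x2,y2,z2}. \<forall>bq\<in>{x1,y1,z1,x2,y2,z2}. aq \<noteq> bq \<longrightarrow> F_free_set E S {aq,bq} \<longrightarrow> Pc V E {x1,y1,z1,x2,y2,z2} {aq,bq}" by (simp add: nq nf_x1_y1 nf_y1_x1 nf_x1_z1 nf_z1_x1 nf_x1_x2 nf_x2_x1 nf_x1_y2 nf_y2_x1 nf_x1_z2 nf_z2_x1 nf_y1_z1 nf_z1_y1 nf_y1_x2 nf_x2_y1 p_y1_y2 p_y2_y1 nf_y1_z2 nf_z2_y1 nf_z1_x2 nf_x2_z1 nf_z1_y2 nf_y2_z1 nf_z1_z2 nf_z2_z1 nf_x2_y2 nf_y2_x2 nf_x2_z2 nf_z2_x2 nf_y2_z2 nf_z2_y2)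
  qed
qed

lemma conf10:
  assumes gr: "graph V E" and h0: "(\<exists>a b p q c s v. distinct [a,b,p,q,c,s,v] \<and> dia E a b p q \<and> deg V E a = 4 \<and> deg V E b = 3 \<and> deg V E p \<ge> 5 \<and> deg V E q = 5 \<and> dia E q c s v \<and> deg V E c = 3 \<and> deg V E s = 4 \<and> deg V E v \<ge> 4 \<and> S = {a,b,p,q,c,s,v} \<and> B = {p,v})"
  shows "boundary_reducible V E S (S - B) 4"
proof -
  have irr: "\<forall>v. \<not>E v v" and sym: "\<forall>u v. E u v \<longrightarrow> E v u" using gr unfolding graph_def by auto
  from h0 obtain a b p q c s v where h: "distinct [a,b,p,q,c,s,v]" "dia E a b p q" "deg V E a = 4" "deg V E b = 3" "deg V E p \<ge> 5" "deg V E q = 5" "dia E q c s v" "deg V E c = 3" "deg V E s = 4" "deg V E v \<ge> 4" "S = {a,b,p,q,c,s,v}" "B = {p,v}" by blast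
  have nq: "a \<noteq> b" "a \<noteq> p" "a \<noteq> q" "a \<noteq> c" "a \<noteq> s" "a \<noteq> v" "b \<noteq> a" "b \<noteq> p" "b \<noteq> q" "b \<noteq> c" "b \<noteq> s" "b \<noteq> v" "p \<noteq> a" "p \<noteq> b" "p \<noteq> q" "p \<noteq> c" "p \<noteq> s" "p \<noteq> v" "q \<noteq> a" "q \<noteq> b" "q \<noteq> p" "q \<noteq> c" "q \<noteq> s" "q \<noteq> v" "c \<noteq> a" "c \<noteq> b" "c \<noteq> p" "c \<noteq> q" "c \<noteq> s" "c \<noteq> v" "s \<noteq> a" "s \<noteq> b" "s \<noteq> p" "s \<noteq> q" "s \<noteq> c" "s \<noteq> v" "v \<noteq> a" "v \<noteq> b" "v \<noteq> p" "v \<noteq> q" "v \<noteq> c" "v \<noteq> s" using h unfolding dia_def by auto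
  have ed: "E a b" "E b a" "E a p" "E p a" "E b p" "E p b" "E a q" "E q a" "E b q" "E q b" "E q c" "E c q" "E q s" "E s q" "E c s" "E s c" "E q v" "E v q" "E c v" "E v c" using h sym unfolding dia_def by auto
  have dg: "deg V E a = 4" "deg V E b = 3" "deg V E q = 5" "deg V E c = 3" "deg V E s = 4" using h by auto
  have Se: "S = {a,b,p,q,c,s,v}" and Be: "B = {p,v}" using h by auto
  have Re: "S - B = {a,b,q,c,s}" using Se Be nq by auto
  have fx_a: "Pf V E {a,b,q,c,s} a" by (rule greedy_fix[OF irr sym, where ys="[b,c,q,s]" and wss="[[],[],[b,c],[c,q]]"]) (simp_all add: ed nq dg)
  have fx_b: "Pf V E {a,b,q,c,s} b" by (rule greedy_fix[OF irr sym, where ys="[c,s,q,a]" and wss="[[],[c],[c,s],[q]]"]) (simp_all add: ed nq dg)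
  have fx_q: "Pf V E {a,b,q,c,s} q" by (rule greedy_fix[OF irr sym, where ys="[b,a,c,s]" and wss="[[],[b],[],[c]]"]) (simp_all add: ed nq dg)
  have fx_c: "Pf V E {a,b,q,c,s} c" by (rule greedy_fix[OF irr sym, where ys="[b,a,q,s]" and wss="[[],[b],[b,a],[q]]"]) (simp_all add: ed nq dg)
  have fx_s: "Pf V E {a,b,q,c,s} s" by (rule greedy_fix[OF irr sym, where ys="[b,a,c,q]" and wss="[[],[b],[],[b,a,c]]"]) (simp_all add: ed nq dg)
  have nf_a_b: "\<not> F_free_set E S {a,b}" by (rule nffb, rule b5I[of "Some a" "Some b" "Some p" "Some q" None]) (simp_all add: ext_edge_def Se ed nq)
  have nf_b_a: "\<not> F_free_set E S {b,a}" by (subst insert_commute) (rule nf_a_b)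
  have nf_a_q: "\<not> F_free_set E S {a,q}" by (rule nff5, rule cyc5I[of "Some a" "Some p" "Some b" "Some q" None]) (simp_all add: ext_edge_def Se ed nq)
  have nf_q_a: "\<not> F_free_set E S {q,a}" by (subst insert_commute) (rule nf_a_q)
  have nf_a_c: "\<not> F_free_set E S {a,c}" by (rule nff5, rule cyc5I[of "Some a" "Some b" "Some q" "Some c" None]) (simp_all add: ext_edge_def Se ed nq)
  have nf_c_a: "\<not> F_free_set E S {c,a}" by (subst insert_commute) (rule nf_a_c)
  have nf_a_s: "\<not> F_free_set E S {a,s}" by (rule nff5, rule cyc5I[of "Some a" "Some b" "Some q" "Some s" None]) (simp_all add: ext_edge_def Se ed nq)
  have nf_s_a: "\<not> F_free_set E S {s,a}" by (subst insert_commute) (rule nf_a_s)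
  have nf_b_q: "\<not> F_free_set E S {b,q}" by (rule nff5, rule cyc5I[of "Some a" "Some p" "Some b" None "Some q"]) (simp_all add: ext_edge_def Se ed nq)
  have nf_q_b: "\<not> F_free_set E S {q,b}" by (subst insert_commute) (rule nf_b_q)
  have nf_b_c: "\<not> F_free_set E S {b,c}" by (rule nff5, rule cyc5I[of "Some a" "Some b" None "Some c" "Some q"]) (simp_all add: ext_edge_def Se ed nq)
  have nf_c_b: "\<not> F_free_set E S {c,b}" by (subst insert_commute) (rule nf_b_c)
  have nf_b_s: "\<not> F_free_set E S {b,s}" by (rule nff5, rule cyc5I[of "Some a" "Some b" None "Some s" "Some q"]) (simp_all add: ext_edge_def Se ed nq)
  have nf_s_b: "\<not> F_free_set E S {s,b}" by (subst insert_commute) (rule nf_b_s)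
  have nf_q_c: "\<not> F_free_set E S {q,c}" by (rule nffb, rule b5I[of "Some q" "Some c" "Some s" "Some v" None]) (simp_all add: ext_edge_def Se ed nq)
  have nf_c_q: "\<not> F_free_set E S {c,q}" by (subst insert_commute) (rule nf_q_c)
  have nf_q_s: "\<not> F_free_set E S {q,s}" by (rule nff5, rule cyc5I[of "Some c" "Some s" None "Some q" "Some v"]) (simp_all add: ext_edge_def Se ed nq)
  have nf_s_q: "\<not> F_free_set E S {s,q}" by (subst insert_commute) (rule nf_q_s)
  have nf_c_s: "\<not> F_free_set E S {c,s}" by (rule nff5, rule cyc5I[of "Some c" "Some v" "Some q" "Some s" None]) (simp_all add: ext_edge_def Se ed nq)
  have nf_s_c: "\<not> F_free_set E S {s,c}" by (subst insert_commute) (rule nf_c_s)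
  have s_a: "Pc V E {a,b,q,c,s} {a}" by (rule greedy_forb[OF irr sym, where xs="[b,c,q,a,s]" and wss="[[],[],[b,c],[b,q],[c,q]]"]) (simp_all add: ed nq dg)
  have s_b: "Pc V E {a,b,q,c,s} {b}" by (rule greedy_forb[OF irr sym, where xs="[c,s,q,a,b]" and wss="[[],[c],[c,s],[q],[q,a]]"]) (simp_all add: ed nq dg)
  have s_q: "Pc V E {a,b,q,c,s} {q}" by (rule greedy_forb[OF irr sym, where xs="[b,a,c,q,s]" and wss="[[],[b],[],[b,a,c],[c,q]]"]) (simp_all add: ed nq dg)
  have s_c: "Pc V E {a,b,q,c,s} {c}" by (rule greedy_forb[OF irr sym, where xs="[b,a,q,c,s]" and wss="[[],[b],[b,a],[q],[q,c]]"]) (simp_all add: ed nq dg)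
  have s_s: "Pc V E {a,b,q,c,s} {s}" by (rule greedy_forb[OF irr sym, where xs="[b,a,c,q,s]" and wss="[[],[b],[],[b,a,c],[c,q]]"]) (simp_all add: ed nq dg)
  show ?thesis unfolding Re
  proof (rule br_intro)
    show "{a,b,q,c,s} \<noteq> {}" by simp
    show "{a,b,q,c,s} \<subseteq> S" using Se by auto
    show "finite {a,b,q,c,s}" by simp
    show "\<forall>vq\<in>{a,b,q,c,s}. Pf V E {a,b,q,c,s} vq" using fx_a fx_b fx_q fx_c fx_s by simp
    show "\<forall>aq\<in>{a,b,q,c,s}. Pc V E {a,b,q,c,s} {aq}" using s_a s_b s_q s_c s_s by simp
    show "\<forall>aq\<in>{a,b,q,c,s}. \<forall>bq\<in>{a,b,q,c,s}. aq \<noteq> bq \<longrightarrow> F_free_set E S {aq,bq} \<longrightarrow> Pc V E {a,b,q,c,s} {aq,bq}" by (simp add: nq nf_a_b nf_b_a nf_a_q nf_q_a nf_a_c nf_c_a nf_a_s nf_s_a nf_b_q nf_q_b nf_b_c nf_c_b nf_b_s nf_s_b nf_q_c nf_c_q nf_q_s nf_s_q nf_c_s nf_s_c)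
  qed
qed

lemma conf11:
  assumes gr: "graph V E" and h0: "(\<exists>m1 m2 s1 s2 u. dia E m1 m2 s1 s2 \<and> deg V E m1 = 4 \<and> deg V E m2 = 4 \<and> deg V E s1 = 3 \<and> deg V E s2 = 4 \<and> u \<notin> {m1,m2,s1,s2} \<and> deg V E u = 3 \<and> E u m1 \<and> S = {m1,m2,s1,s2,u} \<and> B = {})"
  shows "boundary_reducible V E S (S - B) 4"
proof -
  have irr: "\<forall>v. \<not>E v v" and sym: "\<forall>u v. E u v \<longrightarrow> E v u" using gr unfolding graph_def by auto
  from h0 obtain m1 m2 s1 s2 u where h: "dia E m1 m2 s1 s2" "deg V E m1 = 4" "deg V E m2 = 4" "deg V E s1 = 3" "deg V E s2 = 4" "u \<notin> {m1,m2,s1,s2}" "deg V E u = 3" "E u m1" "S = {m1,m2,s1,s2,u}" "B = {}" by blast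
  have nq: "m1 \<noteq> m2" "m1 \<noteq> s1" "m1 \<noteq> s2" "m1 \<noteq> u" "m2 \<noteq> m1" "m2 \<noteq> s1" "m2 \<noteq> s2" "m2 \<noteq> u" "s1 \<noteq> m1" "s1 \<noteq> m2" "s1 \<noteq> s2" "s1 \<noteq> u" "s2 \<noteq> m1" "s2 \<noteq> m2" "s2 \<noteq> s1" "s2 \<noteq> u" "u \<noteq> m1" "u \<noteq> m2" "u \<noteq> s1" "u \<noteq> s2" using h unfolding dia_def by auto
  have ed: "E m1 m2" "E m2 m1" "E m1 s1" "E s1 m1" "E m2 s1" "E s1 m2" "E m1 s2" "E s2 m1" "E m2 s2" "E s2 m2" "E u m1" "E m1 u" using h sym unfolding dia_def by auto
  have dg: "deg V E m1 = 4" "deg V E m2 = 4" "deg V E s1 = 3" "deg V E s2 = 4" "deg V E u = 3" using h by auto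
  have Se: "S = {m1,m2,s1,s2,u}" and Be: "B = {}" using h by auto
  have Re: "S - B = {m1,m2,s1,s2,u}" using Se Be nq by auto
  have fx_m1: "Pf V E {m1,m2,s1,s2,u} m1" by (rule greedy_fix[OF irr sym, where ys="[s1,m2,s2,u]" and wss="[[],[s1],[m2],[]]"]) (simp_all add: ed nq dg)
  have fx_m2: "Pf V E {m1,m2,s1,s2,u} m2" by (rule greedy_fix[OF irr sym, where ys="[s1,m1,s2,u]" and wss="[[],[s1],[m1],[m1]]"]) (simp_all add: ed nq dg)
  have fx_s1: "Pf V E {m1,m2,s1,s2,u} s1" by (rule greedy_fix[OF irr sym, where ys="[u,m1,m2,s2]" and wss="[[],[u],[m1],[m1,m2]]"]) (simp_all add: ed nq dg)
  have fx_s2: "Pf V E {m1,m2,s1,s2,u} s2" by (rule greedy_fix[OF irr sym, where ys="[s1,m1,m2,u]" and wss="[[],[s1],[s1,m1],[m1]]"]) (simp_all add: ed nq dg)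
  have fx_u: "Pf V E {m1,m2,s1,s2,u} u" by (rule greedy_fix[OF irr sym, where ys="[s1,m1,m2,s2]" and wss="[[],[s1],[s1,m1],[m1,m2]]"]) (simp_all add: ed nq dg)
  have nf_m1_m2: "\<not> F_free_set E S {m1,m2}" by (rule nffb, rule b5I[of "Some m1" "Some m2" "Some s1" "Some s2" None]) (simp_all add: ext_edge_def Se ed nq)
  have nf_m2_m1: "\<not> F_free_set E S {m2,m1}" by (subst insert_commute) (rule nf_m1_m2)
  have nf_m1_s1: "\<not> F_free_set E S {m1,s1}" by (rule nff5, rule cyc5I[of "Some m1" "Some s2" "Some m2" "Some s1" None]) (simp_all add: ext_edge_def Se ed nq)
  have nf_s1_m1: "\<not> F_free_set E S {s1,m1}" by (subst insert_commute) (rule nf_m1_s1)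
  have nf_m1_s2: "\<not> F_free_set E S {m1,s2}" by (rule nff5, rule cyc5I[of "Some m1" "Some s1" "Some m2" "Some s2" None]) (simp_all add: ext_edge_def Se ed nq)
  have nf_s2_m1: "\<not> F_free_set E S {s2,m1}" by (subst insert_commute) (rule nf_m1_s2)
  have p_m1_u: "Pc V E {m1,m2,s1,s2,u} {m1,u}" by (rule greedy_forb[OF irr sym, where xs="[s1,m2,m1,s2,u]" and wss="[[],[s1],[s1,m2],[m2,m1],[m1]]"]) (simp_all add: ed nq dg)
  have p_u_m1: "Pc V E {m1,m2,s1,s2,u} {u,m1}" by (subst insert_commute) (rule p_m1_u)
  have nf_m2_s1: "\<not> F_free_set E S {m2,s1}" by (rule nff5, rule cyc5I[of "Some m1" "Some s1" None "Some m2" "Some s2"]) (simp_all add: ext_edge_def Se ed nq)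
  have nf_s1_m2: "\<not> F_free_set E S {s1,m2}" by (subst insert_commute) (rule nf_m2_s1)
  have nf_m2_s2: "\<not> F_free_set E S {m2,s2}" by (rule nff5, rule cyc5I[of "Some m1" "Some s1" "Some m2" None "Some s2"]) (simp_all add: ext_edge_def Se ed nq)
  have nf_s2_m2: "\<not> F_free_set E S {s2,m2}" by (subst insert_commute) (rule nf_m2_s2)
  have nf_m2_u: "\<not> F_free_set E S {m2,u}" by (rule nff5, rule cyc5I[of "Some m1" "Some s1" "Some m2" None "Some u"]) (simp_all add: ext_edge_def Se ed nq)
  have nf_u_m2: "\<not> F_free_set E S {u,m2}" by (subst insert_commute) (rule nf_m2_u)
  have nf_s1_s2: "\<not> F_free_set E S {s1,s2}" by (rule nff5, rule cyc5I[of "Some m1" "Some m2" "Some s1" None "Some s2"]) (simp_all add: ext_edge_def Se ed nq)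
  have nf_s2_s1: "\<not> F_free_set E S {s2,s1}" by (subst insert_commute) (rule nf_s1_s2)
  have nf_s1_u: "\<not> F_free_set E S {s1,u}" by (rule nff5, rule cyc5I[of "Some m1" "Some m2" "Some s1" None "Some u"]) (simp_all add: ext_edge_def Se ed nq)
  have nf_u_s1: "\<not> F_free_set E S {u,s1}" by (subst insert_commute) (rule nf_s1_u)
  have nf_s2_u: "\<not> F_free_set E S {s2,u}" by (rule nff5, rule cyc5I[of "Some m1" "Some m2" "Some s2" None "Some u"]) (simp_all add: ext_edge_def Se ed nq)
  have nf_u_s2: "\<not> F_free_set E S {u,s2}" by (subst insert_commute) (rule nf_s2_u)
  have s_m1: "Pc V E {m1,m2,s1,s2,u} {m1}" by (rule Pc_mono[OF _ p_m1_u]) simp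
  have s_m2: "Pc V E {m1,m2,s1,s2,u} {m2}" by (rule greedy_forb[OF irr sym, where xs="[s1,m1,m2,s2,u]" and wss="[[],[s1],[s1,m1],[m1,m2],[m1]]"]) (simp_all add: ed nq dg)
  have s_s1: "Pc V E {m1,m2,s1,s2,u} {s1}" by (rule greedy_forb[OF irr sym, where xs="[u,m1,m2,s1,s2]" and wss="[[],[u],[m1],[m1,m2],[m1,m2]]"]) (simp_all add: ed nq dg)
  have s_s2: "Pc V E {m1,m2,s1,s2,u} {s2}" by (rule greedy_forb[OF irr sym, where xs="[s1,m1,m2,s2,u]" and wss="[[],[s1],[s1,m1],[m1,m2],[m1]]"]) (simp_all add: ed nq dg)
  have s_u: "Pc V E {m1,m2,s1,s2,u} {u}" by (rule Pc_mono[OF _ p_m1_u]) simp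
  show ?thesis unfolding Re
  proof (rule br_intro)
    show "{m1,m2,s1,s2,u} \<noteq> {}" by simp
    show "{m1,m2,s1,s2,u} \<subseteq> S" using Se by auto
    show "finite {m1,m2,s1,s2,u}" by simp
    show "\<forall>vq\<in>{m1,m2,s1,s2,u}. Pf V E {m1,m2,s1,s2,u} vq" using fx_m1 fx_m2 fx_s1 fx_s2 fx_u by simp
    show "\<forall>aq\<in>{m1,m2,s1,s2,u}. Pc V E {m1,m2,s1,s2,u} {aq}" using s_m1 s_m2 s_s1 s_s2 s_u by simp
    show "\<forall>aq\<in>{m1,m2,s1,s2,u}. \<forall>bq\<in>{m1,m2,s1,s2,u}. aq \<noteq> bq \<longrightarrow> F_free_set E S {aq,bq} \<longrightarrow> Pc V E {m1,m2,s1,s2,u} {aq,bq}" by (simp add: nq nf_m1_m2 nf_m2_m1 nf_m1_s1 nf_s1_m1 nf_m1_s2 nf_s2_m1 p_m1_u p_u_m1 nf_m2_s1 nf_s1_m2 nf_m2_s2 nf_s2_m2 nf_m2_u nf_u_m2 nf_s1_s2 nf_s2_s1 nf_s1_u nf_u_s1 nf_s2_u nf_u_s2)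
  qed
qed

lemma conf12:
  assumes gr: "graph V E" and h0: "(\<exists>x1 y1 z1 w1 m1 m2 s1 s2. distinct [x1,y1,z1,w1,m1,m2,s1,s2] \<and> dia E x1 y1 z1 w1 \<and> deg V E x1 = 3 \<and> deg V E y1 = 4 \<and> deg V E z1 = 4 \<and> deg V E w1 \<ge> 5 \<and> dia E m1 m2 s1 s2 \<and> deg V E m1 = 4 \<and> deg V E m2 = 4 \<and> deg V E s1 = 4 \<and> deg V E s2 = 3 \<and> E y1 m1 \<and> S = {x1,y1,z1,w1,m1,m2,s1,s2} \<and> B = {w1})"
  shows "boundary_reducible V E S (S - B) 4"
proof -
  have irr: "\<forall>v. \<not>E v v" and sym: "\<forall>u v. E u v \<longrightarrow> E v u" using gr unfolding graph_def by auto
  from h0 obtain x1 y1 z1 w1 m1 m2 s1 s2 where h: "distinct [x1,y1,z1,w1,m1,m2,s1,s2]" "dia E x1 y1 z1 w1" "deg V E x1 = 3" "deg V E y1 = 4" "deg V E z1 = 4" "deg V E w1 \<ge> 5" "dia E m1 m2 s1 s2" "deg V E m1 = 4" "deg V E m2 = 4" "deg V E s1 = 4" "deg V E s2 = 3" "E y1 m1" "S = {x1,y1,z1,w1,m1,m2,s1,s2}" "B = {w1}" by blast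
  have nq: "x1 \<noteq> y1" "x1 \<noteq> z1" "x1 \<noteq> w1" "x1 \<noteq> m1" "x1 \<noteq> m2" "x1 \<noteq> s1" "x1 \<noteq> s2" "y1 \<noteq> x1" "y1 \<noteq> z1" "y1 \<noteq> w1" "y1 \<noteq> m1" "y1 \<noteq> m2" "y1 \<noteq> s1" "y1 \<noteq> s2" "z1 \<noteq> x1" "z1 \<noteq> y1" "z1 \<noteq> w1" "z1 \<noteq> m1" "z1 \<noteq> m2" "z1 \<noteq> s1" "z1 \<noteq> s2" "w1 \<noteq> x1" "w1 \<noteq> y1" "w1 \<noteq> z1" "w1 \<noteq> m1" "w1 \<noteq> m2" "w1 \<noteq> s1" "w1 \<noteq> s2" "m1 \<noteq> x1" "m1 \<noteq> y1" "m1 \<noteq> z1" "m1 \<noteq> w1" "m1 \<noteq> m2" "m1 \<noteq> s1" "m1 \<noteq> s2" "m2 \<noteq> x1" "m2 \<noteq> y1" "m2 \<noteq> z1" "m2 \<noteq> w1" "m2 \<noteq> m1" "m2 \<noteq> s1" "m2 \<noteq> s2" "s1 \<noteq> x1" "s1 \<noteq> y1" "s1 \<noteq> z1" "s1 \<noteq> w1" "s1 \<noteq> m1" "s1 \<noteq> m2" "s1 \<noteq> s2" "s2 \<noteq> x1" "s2 \<noteq> y1" "s2 \<noteq> z1" "s2 \<noteq> w1" "s2 \<noteq> m1" "s2 \<noteq> m2" "s2 \<noteq> s1" using h unfolding dia_def by auto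
  have ed: "E x1 y1" "E y1 x1" "E x1 z1" "E z1 x1" "E y1 z1" "E z1 y1" "E x1 w1" "E w1 x1" "E y1 w1" "E w1 y1" "E m1 m2" "E m2 m1" "E m1 s1" "E s1 m1" "E m2 s1" "E s1 m2" "E m1 s2" "E s2 m1" "E m2 s2" "E s2 m2" "E y1 m1" "E m1 y1" using h sym unfolding dia_def by auto
  have dg: "deg V E x1 = 3" "deg V E y1 = 4" "deg V E z1 = 4" "deg V E m1 = 4" "deg V E m2 = 4" "deg V E s1 = 4" "deg V E s2 = 3" using h by auto
  have Se: "S = {x1,y1,z1,w1,m1,m2,s1,s2}" and Be: "B = {w1}" using h by auto
  have Re: "S - B = {x1,y1,z1,m1,m2,s1,s2}" using Se Be nq by auto
  have fx_x1: "Pf V E {x1,y1,z1,m1,m2,s1,s2} x1" by (rule greedy_fix[OF irr sym, where ys="[s2,m1,m2,s1,y1,z1]" and wss="[[],[s2],[s2,m1],[m1,m2],[m1],[y1]]"]) (simp_all add: ed nq dg)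
  have fx_y1: "Pf V E {x1,y1,z1,m1,m2,s1,s2} y1" by (rule greedy_fix[OF irr sym, where ys="[s2,m1,m2,s1,x1,z1]" and wss="[[],[s2],[s2,m1],[m1,m2],[],[x1]]"]) (simp_all add: ed nq dg)
  have fx_z1: "Pf V E {x1,y1,z1,m1,m2,s1,s2} z1" by (rule greedy_fix[OF irr sym, where ys="[s2,m1,m2,s1,x1,y1]" and wss="[[],[s2],[s2,m1],[m1,m2],[],[m1,x1]]"]) (simp_all add: ed nq dg)
  have fx_m1: "Pf V E {x1,y1,z1,m1,m2,s1,s2} m1" by (rule greedy_fix[OF irr sym, where ys="[s2,m2,s1,x1,y1,z1]" and wss="[[],[s2],[m2],[],[x1],[x1,y1]]"]) (simp_all add: ed nq dg)
  have fx_m2: "Pf V E {x1,y1,z1,m1,m2,s1,s2} m2" by (rule greedy_fix[OF irr sym, where ys="[s2,m1,s1,x1,y1,z1]" and wss="[[],[s2],[m1],[],[m1,x1],[x1,y1]]"]) (simp_all add: ed nq dg)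
  have fx_s1: "Pf V E {x1,y1,z1,m1,m2,s1,s2} s1" by (rule greedy_fix[OF irr sym, where ys="[s2,m1,m2,x1,y1,z1]" and wss="[[],[s2],[s2,m1],[],[m1,x1],[x1,y1]]"]) (simp_all add: ed nq dg)
  have fx_s2: "Pf V E {x1,y1,z1,m1,m2,s1,s2} s2" by (rule greedy_fix[OF irr sym, where ys="[x1,y1,m1,m2,s1,z1]" and wss="[[],[x1],[y1],[m1],[m1,m2],[x1,y1]]"]) (simp_all add: ed nq dg)
  have nf_x1_y1: "\<not> F_free_set E S {x1,y1}" by (rule nffb, rule b5I[of "Some x1" "Some y1" "Some w1" None "Some z1"]) (simp_all add: ext_edge_def Se ed nq)
  have nf_y1_x1: "\<not> F_free_set E S {y1,x1}" by (subst insert_commute) (rule nf_x1_y1)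
  have nf_x1_z1: "\<not> F_free_set E S {x1,z1}" by (rule nff5, rule cyc5I[of "Some w1" "Some x1" None "Some z1" "Some y1"]) (simp_all add: ext_edge_def Se ed nq)
  have nf_z1_x1: "\<not> F_free_set E S {z1,x1}" by (subst insert_commute) (rule nf_x1_z1)
  have nf_x1_m1: "\<not> F_free_set E S {x1,m1}" by (rule nff5, rule cyc5I[of "Some m1" "Some y1" "Some w1" "Some x1" None]) (simp_all add: ext_edge_def Se ed nq)
  have nf_m1_x1: "\<not> F_free_set E S {m1,x1}" by (subst insert_commute) (rule nf_x1_m1)
  have nf_x1_m2: "\<not> F_free_set E S {x1,m2}" by (rule nff5, rule cyc5I[of "Some m1" "Some m2" None "Some x1" "Some y1"]) (simp_all add: ext_edge_def Se ed nq)
  have nf_m2_x1: "\<not> F_free_set E S {m2,x1}" by (subst insert_commute) (rule nf_x1_m2)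
  have nf_x1_s1: "\<not> F_free_set E S {x1,s1}" by (rule nff5, rule cyc5I[of "Some m1" "Some s1" None "Some x1" "Some y1"]) (simp_all add: ext_edge_def Se ed nq)
  have nf_s1_x1: "\<not> F_free_set E S {s1,x1}" by (subst insert_commute) (rule nf_x1_s1)
  have nf_x1_s2: "\<not> F_free_set E S {x1,s2}" by (rule nff5, rule cyc5I[of "Some m1" "Some s2" None "Some x1" "Some y1"]) (simp_all add: ext_edge_def Se ed nq)
  have nf_s2_x1: "\<not> F_free_set E S {s2,x1}" by (subst insert_commute) (rule nf_x1_s2)
  have nf_y1_z1: "\<not> F_free_set E S {y1,z1}" by (rule nff5, rule cyc5I[of "Some w1" "Some x1" "Some z1" None "Some y1"]) (simp_all add: ext_edge_def Se ed nq)
  have nf_z1_y1: "\<not> F_free_set E S {z1,y1}" by (subst insert_commute) (rule nf_y1_z1)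
  have p_y1_m1: "Pc V E {x1,y1,z1,m1,m2,s1,s2} {y1,m1}" by (rule greedy_forb[OF irr sym, where xs="[s2,m2,m1,s1,x1,y1,z1]" and wss="[[],[s2],[s2,m2],[m2,m1],[],[m1,x1],[x1,y1]]"]) (simp_all add: ed nq dg)
  have p_m1_y1: "Pc V E {x1,y1,z1,m1,m2,s1,s2} {m1,y1}" by (subst insert_commute) (rule p_y1_m1)
  have nf_y1_m2: "\<not> F_free_set E S {y1,m2}" by (rule nff5, rule cyc5I[of "Some m1" "Some s1" "Some m2" None "Some y1"]) (simp_all add: ext_edge_def Se ed nq)
  have nf_m2_y1: "\<not> F_free_set E S {m2,y1}" by (subst insert_commute) (rule nf_y1_m2)
  have nf_y1_s1: "\<not> F_free_set E S {y1,s1}" by (rule nff5, rule cyc5I[of "Some m1" "Some m2" "Some s1" None "Some y1"]) (simp_all add: ext_edge_def Se ed nq)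
  have nf_s1_y1: "\<not> F_free_set E S {s1,y1}" by (subst insert_commute) (rule nf_y1_s1)
  have nf_y1_s2: "\<not> F_free_set E S {y1,s2}" by (rule nff5, rule cyc5I[of "Some m1" "Some m2" "Some s2" None "Some y1"]) (simp_all add: ext_edge_def Se ed nq)
  have nf_s2_y1: "\<not> F_free_set E S {s2,y1}" by (subst insert_commute) (rule nf_y1_s2)
  have nf_z1_m1: "\<not> F_free_set E S {z1,m1}" by (rule nff5, rule cyc5I[of "Some m1" "Some y1" "Some x1" "Some z1" None]) (simp_all add: ext_edge_def Se ed nq)
  have nf_m1_z1: "\<not> F_free_set E S {m1,z1}" by (subst insert_commute) (rule nf_z1_m1)
  have nf_z1_m2: "\<not> F_free_set E S {z1,m2}" by (rule nff5, rule cyc5I[of "Some m1" "Some m2" None "Some z1" "Some y1"]) (simp_all add: ext_edge_def Se ed nq)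
  have nf_m2_z1: "\<not> F_free_set E S {m2,z1}" by (subst insert_commute) (rule nf_z1_m2)
  have nf_z1_s1: "\<not> F_free_set E S {z1,s1}" by (rule nff5, rule cyc5I[of "Some m1" "Some s1" None "Some z1" "Some y1"]) (simp_all add: ext_edge_def Se ed nq)
  have nf_s1_z1: "\<not> F_free_set E S {s1,z1}" by (subst insert_commute) (rule nf_z1_s1)
  have nf_z1_s2: "\<not> F_free_set E S {z1,s2}" by (rule nff5, rule cyc5I[of "Some m1" "Some s2" None "Some z1" "Some y1"]) (simp_all add: ext_edge_def Se ed nq)
  have nf_s2_z1: "\<not> F_free_set E S {s2,z1}" by (subst insert_commute) (rule nf_z1_s2)
  have nf_m1_m2: "\<not> F_free_set E S {m1,m2}" by (rule nffb, rule b5I[of "Some m1" "Some m2" "Some s1" "Some s2" None]) (simp_all add: ext_edge_def Se ed nq)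
  have nf_m2_m1: "\<not> F_free_set E S {m2,m1}" by (subst insert_commute) (rule nf_m1_m2)
  have nf_m1_s1: "\<not> F_free_set E S {m1,s1}" by (rule nff5, rule cyc5I[of "Some m1" "Some s2" "Some m2" "Some s1" None]) (simp_all add: ext_edge_def Se ed nq)
  have nf_s1_m1: "\<not> F_free_set E S {s1,m1}" by (subst insert_commute) (rule nf_m1_s1)
  have nf_m1_s2: "\<not> F_free_set E S {m1,s2}" by (rule nff5, rule cyc5I[of "Some m1" "Some s1" "Some m2" "Some s2" None]) (simp_all add: ext_edge_def Se ed nq)
  have nf_s2_m1: "\<not> F_free_set E S {s2,m1}" by (subst insert_commute) (rule nf_m1_s2)
  have nf_m2_s1: "\<not> F_free_set E S {m2,s1}" by (rule nff5, rule cyc5I[of "Some m1" "Some s1" None "Some m2" "Some s2"]) (simp_all add: ext_edge_def Se ed nq)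
  have nf_s1_m2: "\<not> F_free_set E S {s1,m2}" by (subst insert_commute) (rule nf_m2_s1)
  have nf_m2_s2: "\<not> F_free_set E S {m2,s2}" by (rule nff5, rule cyc5I[of "Some m1" "Some s1" "Some m2" None "Some s2"]) (simp_all add: ext_edge_def Se ed nq)
  have nf_s2_m2: "\<not> F_free_set E S {s2,m2}" by (subst insert_commute) (rule nf_m2_s2)
  have nf_s1_s2: "\<not> F_free_set E S {s1,s2}" by (rule nff5, rule cyc5I[of "Some m1" "Some m2" "Some s1" None "Some s2"]) (simp_all add: ext_edge_def Se ed nq)
  have nf_s2_s1: "\<not> F_free_set E S {s2,s1}" by (subst insert_commute) (rule nf_s1_s2)
  have s_x1: "Pc V E {x1,y1,z1,m1,m2,s1,s2} {x1}" by (rule greedy_forb[OF irr sym, where xs="[s2,m1,m2,s1,y1,x1,z1]" and wss="[[],[s2],[s2,m1],[m1,m2],[m1],[y1],[y1,x1]]"]) (simp_all add: ed nq dg)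
  have s_y1: "Pc V E {x1,y1,z1,m1,m2,s1,s2} {y1}" by (rule Pc_mono[OF _ p_y1_m1]) simp
  have s_z1: "Pc V E {x1,y1,z1,m1,m2,s1,s2} {z1}" by (rule greedy_forb[OF irr sym, where xs="[s2,m1,m2,s1,x1,y1,z1]" and wss="[[],[s2],[s2,m1],[m1,m2],[],[m1,x1],[x1,y1]]"]) (simp_all add: ed nq dg)
  have s_m1: "Pc V E {x1,y1,z1,m1,m2,s1,s2} {m1}" by (rule Pc_mono[OF _ p_y1_m1]) simp
  have s_m2: "Pc V E {x1,y1,z1,m1,m2,s1,s2} {m2}" by (rule greedy_forb[OF irr sym, where xs="[s2,m1,m2,s1,x1,y1,z1]" and wss="[[],[s2],[s2,m1],[m1,m2],[],[m1,x1],[x1,y1]]"]) (simp_all add: ed nq dg)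
  have s_s1: "Pc V E {x1,y1,z1,m1,m2,s1,s2} {s1}" by (rule greedy_forb[OF irr sym, where xs="[s2,m1,m2,s1,x1,y1,z1]" and wss="[[],[s2],[s2,m1],[m1,m2],[],[m1,x1],[x1,y1]]"]) (simp_all add: ed nq dg)
  have s_s2: "Pc V E {x1,y1,z1,m1,m2,s1,s2} {s2}" by (rule greedy_forb[OF irr sym, where xs="[x1,y1,m1,m2,s1,s2,z1]" and wss="[[],[x1],[y1],[m1],[m1,m2],[m1,m2],[x1,y1]]"]) (simp_all add: ed nq dg)
  show ?thesis unfolding Re
  proof (rule br_intro)
    show "{x1,y1,z1,m1,m2,s1,s2} \<noteq> {}" by simp
    show "{x1,y1,z1,m1,m2,s1,s2} \<subseteq> S" using Se by auto
    show "finite {x1,y1,z1,m1,m2,s1,s2}" by simp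
    show "\<forall>vq\<in>{x1,y1,z1,m1,m2,s1,s2}. Pf V E {x1,y1,z1,m1,m2,s1,s2} vq" using fx_x1 fx_y1 fx_z1 fx_m1 fx_m2 fx_s1 fx_s2 by simp
    show "\<forall>aq\<in>{x1,y1,z1,m1,m2,s1,s2}. Pc V E {x1,y1,z1,m1,m2,s1,s2} {aq}" using s_x1 s_y1 s_z1 s_m1 s_m2 s_s1 s_s2 by simp
    show "\<forall>aq\<in>{x1,y1,z1,m1,m2,s1,s2}. \<forall>bq\<in>{x1,y1,z1,m1,m2,s1,s2}. aq \<noteq> bq \<longrightarrow> F_free_set E S {aq,bq} \<longrightarrow> Pc V E {x1,y1,z1,m1,m2,s1,s2} {aq,bq}" by (simp add: nq nf_x1_y1 nf_y1_x1 nf_x1_z1 nf_z1_x1 nf_x1_m1 nf_m1_x1 nf_x1_m2 nf_m2_x1 nf_x1_s1 nf_s1_x1 nf_x1_s2 nf_s2_x1 nf_y1_z1 nf_z1_y1 p_y1_m1 p_m1_y1 nf_y1_m2 nf_m2_y1 nf_y1_s1 nf_s1_y1 nf_y1_s2 nf_s2_y1 nf_z1_m1 nf_m1_z1 nf_z1_m2 nf_m2_z1 nf_z1_s1 nf_s1_z1 nf_z1_s2 nf_s2_z1 nf_m1_m2 nf_m2_m1 nf_m1_s1 nf_s1_m1 nf_m1_s2 nf_s2_m1 nf_m2_s1 nf_s1_m2 nf_m2_s2 nf_s2_m2 nf_s1_s2 nf_s2_s1)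
  qed
qed

lemma conf13:
  assumes gr: "graph V E" and h0: "(\<exists>a b c x e f g h i j. distinct [a,b,c,x,e,f,g,h,i,j] \<and> dia E a b c x \<and> deg V E a = 3 \<and> deg V E b = 5 \<and> deg V E c = 5 \<and> deg V E x = 5 \<and> dia E c e f g \<and> deg V E e = 3 \<and> deg V E f = 4 \<and> deg V E g \<ge> 5 \<and> dia E x h i j \<and> deg V E h = 3 \<and> deg V E i = 4 \<and> deg V E j \<ge> 5 \<and> S = {a,b,c,x,e,f,g,h,i,j} \<and> B = {g,j})"
  shows "boundary_reducible V E S (S - B) 4"
proof -
  have irr: "\<forall>v. \<not>E v v" and sym: "\<forall>u v. E u v \<longrightarrow> E v u" using gr unfolding graph_def by auto
  from h0 obtain a b c x e f g h i j where h: "distinct [a,b,c,x,e,f,g,h,i,j]" "dia E a b c x" "deg V E a = 3" "deg V E b = 5" "deg V E c = 5" "deg V E x = 5" "dia E c e f g" "deg V E e = 3" "deg V E f = 4" "deg V E g \<ge> 5" "dia E x h i j" "deg V E h = 3" "deg V E i = 4" "deg V E j \<ge> 5" "S = {a,b,c,x,e,f,g,h,i,j}" "B = {g,j}" by blast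
  have nq: "a \<noteq> b" "a \<noteq> c" "a \<noteq> x" "a \<noteq> e" "a \<noteq> f" "a \<noteq> g" "a \<noteq> h" "a \<noteq> i" "a \<noteq> j" "b \<noteq> a" "b \<noteq> c" "b \<noteq> x" "b \<noteq> e" "b \<noteq> f" "b \<noteq> g" "b \<noteq> h" "b \<noteq> i" "b \<noteq> j" "c \<noteq> a" "c \<noteq> b" "c \<noteq> x" "c \<noteq> e" "c \<noteq> f" "c \<noteq> g" "c \<noteq> h" "c \<noteq> i" "c \<noteq> j" "x \<noteq> a" "x \<noteq> b" "x \<noteq> c" "x \<noteq> e" "x \<noteq> f" "x \<noteq> g" "x \<noteq> h" "x \<noteq> i" "x \<noteq> j" "e \<noteq> a" "e \<noteq> b" "e \<noteq> c" "e \<noteq> x" "e \<noteq> f" "e \<noteq> g" "e \<noteq> h" "e \<noteq> i" "e \<noteq> j" "f \<noteq> a" "f \<noteq> b" "f \<noteq> c" "f \<noteq> x" "f \<noteq> e" "f \<noteq> g" "f \<noteq> h" "f \<noteq> i" "f \<noteq> j" "g \<noteq> a" "g \<noteq> b" "g \<noteq> c" "g \<noteq> x" "g \<noteq> e" "g \<noteq> f" "g \<noteq> h" "g \<noteq> i" "g \<noteq> j" "h \<noteq> a" "h \<noteq> b" "h \<noteq> c" "h \<noteq> x" "h \<noteq> e" "h \<noteq> f" "h \<noteq> g" "h \<noteq> i" "h \<noteq> j" "i \<noteq> a" "i \<noteq> b" "i \<noteq> c" "i \<noteq> x" "i \<noteq> e" "i \<noteq> f" "i \<noteq> g" "i \<noteq>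 h" "i \<noteq> j" "j \<noteq> a" "j \<noteq> b" "j \<noteq> c" "j \<noteq> x" "j \<noteq> e" "j \<noteq> f" "j \<noteq> g" "j \<noteq> h" "j \<noteq> i" using h unfolding dia_def by auto
  have ed: "E a b" "E b a" "E a c" "E c a" "E b c" "E c b" "E a x" "E x a" "E b x" "E x b" "E c e" "E e c" "E c f" "E f c" "E e f" "E f e" "E c g" "E g c" "E e g" "E g e" "E x h" "E h x" "E x i" "E i x" "E h i" "E i h" "E x j" "E j x" "E h j" "E j h" using h sym unfolding dia_def by auto
  have dg: "deg V E a = 3" "deg V E b = 5" "deg V E c = 5" "deg V E x = 5" "deg V E e = 3" "deg V E f = 4" "deg V E h = 3" "deg V E i = 4" using h by auto
  have Se: "S = {a,b,c,x,e,f,g,h,i,j}" and Be: "B = {g,j}" using h by auto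
  have Re: "S - B = {a,b,c,x,e,f,h,i}" using Se Be nq by auto
  have fx_a: "Pf V E {a,b,c,x,e,f,h,i} a" by (rule greedy_fix[OF irr sym, where ys="[e,f,c,h,i,x,b]" and wss="[[],[e],[e,f],[],[h],[h,i],[c,x]]"]) (simp_all add: ed nq dg)
  have fx_b: "Pf V E {a,b,c,x,e,f,h,i} b" by (rule greedy_fix[OF irr sym, where ys="[a,e,c,f,h,i,x]" and wss="[[],[],[a,e],[e,c],[],[h],[a,h,i]]"]) (simp_all add: ed nq dg)
  have fx_c: "Pf V E {a,b,c,x,e,f,h,i} c" by (rule greedy_fix[OF irr sym, where ys="[a,e,f,h,i,x,b]" and wss="[[],[],[e],[],[h],[a,h,i],[a,x]]"]) (simp_all add: ed nq dg)
  have fx_x: "Pf V E {a,b,c,x,e,f,h,i} x" by (rule greedy_fix[OF irr sym, where ys="[a,e,c,b,f,h,i]" and wss="[[],[],[a,e],[a,c],[e,c],[],[h]]"]) (simp_all add: ed nq dg)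
  have fx_e: "Pf V E {a,b,c,x,e,f,h,i} e" by (rule greedy_fix[OF irr sym, where ys="[a,h,i,x,b,c,f]" and wss="[[],[],[h],[a,h,i],[a,x],[a,b],[c]]"]) (simp_all add: ed nq dg)
  have fx_f: "Pf V E {a,b,c,x,e,f,h,i} f" by (rule greedy_fix[OF irr sym, where ys="[a,e,c,b,h,i,x]" and wss="[[],[],[a,e],[a,c],[],[h],[a,b,h,i]]"]) (simp_all add: ed nq dg)
  have fx_h: "Pf V E {a,b,c,x,e,f,h,i} h" by (rule greedy_fix[OF irr sym, where ys="[a,e,c,b,f,x,i]" and wss="[[],[],[a,e],[a,c],[e,c],[a,b],[x]]"]) (simp_all add: ed nq dg)
  have fx_i: "Pf V E {a,b,c,x,e,f,h,i} i" by (rule greedy_fix[OF irr sym, where ys="[a,e,c,b,f,h,x]" and wss="[[],[],[a,e],[a,c],[e,c],[],[a,b,h]]"]) (simp_all add: ed nq dg)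
  have nf_a_b: "\<not> F_free_set E S {a,b}" by (rule nffb, rule b5I[of "Some a" "Some b" "Some c" "Some x" None]) (simp_all add: ext_edge_def Se ed nq)
  have nf_b_a: "\<not> F_free_set E S {b,a}" by (subst insert_commute) (rule nf_a_b)
  have nf_a_c: "\<not> F_free_set E S {a,c}" by (rule nff5, rule cyc5I[of "Some a" "Some x" "Some b" "Some c" None]) (simp_all add: ext_edge_def Se ed nq)
  have nf_c_a: "\<not> F_free_set E S {c,a}" by (subst insert_commute) (rule nf_a_c)
  have nf_a_x: "\<not> F_free_set E S {a,x}" by (rule nff5, rule cyc5I[of "Some a" "Some c" "Some b" "Some x" None]) (simp_all add: ext_edge_def Se ed nq)
  have nf_x_a: "\<not> F_free_set E S {x,a}" by (subst insert_commute) (rule nf_a_x)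
  have nf_a_e: "\<not> F_free_set E S {a,e}" by (rule nff5, rule cyc5I[of "Some a" "Some b" "Some c" "Some e" None]) (simp_all add: ext_edge_def Se ed nq)
  have nf_e_a: "\<not> F_free_set E S {e,a}" by (subst insert_commute) (rule nf_a_e)
  have nf_a_f: "\<not> F_free_set E S {a,f}" by (rule nff5, rule cyc5I[of "Some a" "Some b" "Some c" "Some f" None]) (simp_all add: ext_edge_def Se ed nq)
  have nf_f_a: "\<not> F_free_set E S {f,a}" by (subst insert_commute) (rule nf_a_f)
  have nf_a_h: "\<not> F_free_set E S {a,h}" by (rule nff5, rule cyc5I[of "Some a" "Some b" "Some x" "Some h" None]) (simp_all add: ext_edge_def Se ed nq)
  have nf_h_a: "\<not> F_free_set E S {h,a}" by (subst insert_commute) (rule nf_a_h)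
  have nf_a_i: "\<not> F_free_set E S {a,i}" by (rule nff5, rule cyc5I[of "Some a" "Some b" "Some x" "Some i" None]) (simp_all add: ext_edge_def Se ed nq)
  have nf_i_a: "\<not> F_free_set E S {i,a}" by (subst insert_commute) (rule nf_a_i)
  have nf_b_c: "\<not> F_free_set E S {b,c}" by (rule nff5, rule cyc5I[of "Some a" "Some c" None "Some b" "Some x"]) (simp_all add: ext_edge_def Se ed nq)
  have nf_c_b: "\<not> F_free_set E S {c,b}" by (subst insert_commute) (rule nf_b_c)
  have nf_b_x: "\<not> F_free_set E S {b,x}" by (rule nff5, rule cyc5I[of "Some a" "Some c" "Some b" None "Some x"]) (simp_all add: ext_edge_def Se ed nq)
  have nf_x_b: "\<not> F_free_set E S {x,b}" by (subst insert_commute) (rule nf_b_x)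
  have nf_b_e: "\<not> F_free_set E S {b,e}" by (rule nff5, rule cyc5I[of "Some a" "Some b" None "Some e" "Some c"]) (simp_all add: ext_edge_def Se ed nq)
  have nf_e_b: "\<not> F_free_set E S {e,b}" by (subst insert_commute) (rule nf_b_e)
  have nf_b_f: "\<not> F_free_set E S {b,f}" by (rule nff5, rule cyc5I[of "Some a" "Some b" None "Some f" "Some c"]) (simp_all add: ext_edge_def Se ed nq)
  have nf_f_b: "\<not> F_free_set E S {f,b}" by (subst insert_commute) (rule nf_b_f)
  have nf_b_h: "\<not> F_free_set E S {b,h}" by (rule nff5, rule cyc5I[of "Some a" "Some b" None "Some h" "Some x"]) (simp_all add: ext_edge_def Se ed nq)
  have nf_h_b: "\<not> F_free_set E S {h,b}" by (subst insert_commute) (rule nf_b_h)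
  have nf_b_i: "\<not> F_free_set E S {b,i}" by (rule nff5, rule cyc5I[of "Some a" "Some b" None "Some i" "Some x"]) (simp_all add: ext_edge_def Se ed nq)
  have nf_i_b: "\<not> F_free_set E S {i,b}" by (subst insert_commute) (rule nf_b_i)
  have nf_c_x: "\<not> F_free_set E S {c,x}" by (rule nff5, rule cyc5I[of "Some a" "Some b" "Some c" None "Some x"]) (simp_all add: ext_edge_def Se ed nq)
  have nf_x_c: "\<not> F_free_set E S {x,c}" by (subst insert_commute) (rule nf_c_x)
  have nf_c_e: "\<not> F_free_set E S {c,e}" by (rule nffb, rule b5I[of "Some c" "Some e" "Some f" "Some g" None]) (simp_all add: ext_edge_def Se ed nq)
  have nf_e_c: "\<not> F_free_set E S {e,c}" by (subst insert_commute) (rule nf_c_e)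
  have nf_c_f: "\<not> F_free_set E S {c,f}" by (rule nff5, rule cyc5I[of "Some c" "Some g" "Some e" "Some f" None]) (simp_all add: ext_edge_def Se ed nq)
  have nf_f_c: "\<not> F_free_set E S {f,c}" by (subst insert_commute) (rule nf_c_f)
  have nf_c_h: "\<not> F_free_set E S {c,h}" by (rule nff5, rule cyc5I[of "Some a" "Some c" None "Some h" "Some x"]) (simp_all add: ext_edge_def Se ed nq)
  have nf_h_c: "\<not> F_free_set E S {h,c}" by (subst insert_commute) (rule nf_c_h)
  have nf_c_i: "\<not> F_free_set E S {c,i}" by (rule nff5, rule cyc5I[of "Some a" "Some c" None "Some i" "Some x"]) (simp_all add: ext_edge_def Se ed nq)
  have nf_i_c: "\<not> F_free_set E S {i,c}" by (subst insert_commute) (rule nf_c_i)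
  have nf_x_e: "\<not> F_free_set E S {x,e}" by (rule nff5, rule cyc5I[of "Some a" "Some c" "Some e" None "Some x"]) (simp_all add: ext_edge_def Se ed nq)
  have nf_e_x: "\<not> F_free_set E S {e,x}" by (subst insert_commute) (rule nf_x_e)
  have nf_x_f: "\<not> F_free_set E S {x,f}" by (rule nff5, rule cyc5I[of "Some a" "Some c" "Some f" None "Some x"]) (simp_all add: ext_edge_def Se ed nq)
  have nf_f_x: "\<not> F_free_set E S {f,x}" by (subst insert_commute) (rule nf_x_f)
  have nf_x_h: "\<not> F_free_set E S {x,h}" by (rule nffb, rule b5I[of "Some x" "Some h" "Some i" "Some j" None]) (simp_all add: ext_edge_def Se ed nq)
  have nf_h_x: "\<not> F_free_set E S {h,x}" by (subst insert_commute) (rule nf_x_h)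
  have nf_x_i: "\<not> F_free_set E S {x,i}" by (rule nff5, rule cyc5I[of "Some h" "Some i" None "Some x" "Some j"]) (simp_all add: ext_edge_def Se ed nq)
  have nf_i_x: "\<not> F_free_set E S {i,x}" by (subst insert_commute) (rule nf_x_i)
  have nf_e_f: "\<not> F_free_set E S {e,f}" by (rule nff5, rule cyc5I[of "Some c" "Some f" None "Some e" "Some g"]) (simp_all add: ext_edge_def Se ed nq)
  have nf_f_e: "\<not> F_free_set E S {f,e}" by (subst insert_commute) (rule nf_e_f)
  have nf_e_h: "\<not> F_free_set E S {e,h}" by (rule nff6, rule cyc6I[of "Some a" "Some c" "Some e" None "Some h" "Some x"]) (simp_all add: ext_edge_def Se ed nq)
  have nf_h_e: "\<not> F_free_set E S {h,e}" by (subst insert_commute) (rule nf_e_h)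
  have nf_e_i: "\<not> F_free_set E S {e,i}" by (rule nff6, rule cyc6I[of "Some a" "Some c" "Some e" None "Some i" "Some x"]) (simp_all add: ext_edge_def Se ed nq)
  have nf_i_e: "\<not> F_free_set E S {i,e}" by (subst insert_commute) (rule nf_e_i)
  have nf_f_h: "\<not> F_free_set E S {f,h}" by (rule nff6, rule cyc6I[of "Some a" "Some c" "Some f" None "Some h" "Some x"]) (simp_all add: ext_edge_def Se ed nq)
  have nf_h_f: "\<not> F_free_set E S {h,f}" by (subst insert_commute) (rule nf_f_h)
  have nf_f_i: "\<not> F_free_set E S {f,i}" by (rule nff6, rule cyc6I[of "Some a" "Some c" "Some f" None "Some i" "Some x"]) (simp_all add: ext_edge_def Se ed nq)
  have nf_i_f: "\<not> F_free_set E S {i,f}" by (subst insert_commute) (rule nf_f_i)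
  have nf_h_i: "\<not> F_free_set E S {h,i}" by (rule nff5, rule cyc5I[of "Some h" "Some j" "Some x" "Some i" None]) (simp_all add: ext_edge_def Se ed nq)
  have nf_i_h: "\<not> F_free_set E S {i,h}" by (subst insert_commute) (rule nf_h_i)
  have s_a: "Pc V E {a,b,c,x,e,f,h,i} {a}" by (rule greedy_forb[OF irr sym, where xs="[e,f,c,a,b,h,i,x]" and wss="[[],[e],[e,f],[c],[c,a],[],[h],[a,b,h,i]]"]) (simp_all add: ed nq dg)
  have s_b: "Pc V E {a,b,c,x,e,f,h,i} {b}" by (rule greedy_forb[OF irr sym, where xs="[a,e,c,f,h,i,x,b]" and wss="[[],[],[a,e],[e,c],[],[h],[a,h,i],[a,c,x]]"]) (simp_all add: ed nq dg)
  have s_c: "Pc V E {a,b,c,x,e,f,h,i} {c}" by (rule greedy_forb[OF irr sym, where xs="[a,e,f,c,b,h,i,x]" and wss="[[],[],[e],[a,e,f],[a,c],[],[h],[a,b,h,i]]"]) (simp_all add: ed nq dg)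
  have s_x: "Pc V E {a,b,c,x,e,f,h,i} {x}" by (rule greedy_forb[OF irr sym, where xs="[a,e,c,b,f,h,i,x]" and wss="[[],[],[a,e],[a,c],[e,c],[],[h],[a,b,h,i]]"]) (simp_all add: ed nq dg)
  have s_e: "Pc V E {a,b,c,x,e,f,h,i} {e}" by (rule greedy_forb[OF irr sym, where xs="[a,h,i,x,b,c,e,f]" and wss="[[],[],[h],[a,h,i],[a,x],[a,b],[c],[c,e]]"]) (simp_all add: ed nq dg)
  have s_f: "Pc V E {a,b,c,x,e,f,h,i} {f}" by (rule greedy_forb[OF irr sym, where xs="[a,e,c,b,f,h,i,x]" and wss="[[],[],[a,e],[a,c],[e,c],[],[h],[a,b,h,i]]"]) (simp_all add: ed nq dg)
  have s_h: "Pc V E {a,b,c,x,e,f,h,i} {h}" by (rule greedy_forb[OF irr sym, where xs="[a,e,c,b,f,x,h,i]" and wss="[[],[],[a,e],[a,c],[e,c],[a,b],[x],[x,h]]"]) (simp_all add: ed nq dg)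
  have s_i: "Pc V E {a,b,c,x,e,f,h,i} {i}" by (rule greedy_forb[OF irr sym, where xs="[a,e,c,b,f,h,x,i]" and wss="[[],[],[a,e],[a,c],[e,c],[],[a,b,h],[h,x]]"]) (simp_all add: ed nq dg)
  show ?thesis unfolding Re
  proof (rule br_intro)
    show "{a,b,c,x,e,f,h,i} \<noteq> {}" by simp
    show "{a,b,c,x,e,f,h,i} \<subseteq> S" using Se by auto
    show "finite {a,b,c,x,e,f,h,i}" by simp
    show "\<forall>vq\<in>{a,b,c,x,e,f,h,i}. Pf V E {a,b,c,x,e,f,h,i} vq" using fx_a fx_b fx_c fx_x fx_e fx_f fx_h fx_i by simp
    show "\<forall>aq\<in>{a,b,c,x,e,f,h,i}. Pc V E {a,b,c,x,e,f,h,i} {aq}" using s_a s_b s_c s_x s_e s_f s_h s_i by simp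
    show "\<forall>aq\<in>{a,b,c,x,e,f,h,i}. \<forall>bq\<in>{a,b,c,x,e,f,h,i}. aq \<noteq> bq \<longrightarrow> F_free_set E S {aq,bq} \<longrightarrow> Pc V E {a,b,c,x,e,f,h,i} {aq,bq}" by (simp add: nq nf_a_b nf_b_a nf_a_c nf_c_a nf_a_x nf_x_a nf_a_e nf_e_a nf_a_f nf_f_a nf_a_h nf_h_a nf_a_i nf_i_a nf_b_c nf_c_b nf_b_x nf_x_b nf_b_e nf_e_b nf_b_f nf_f_b nf_b_h nf_h_b nf_b_i nf_i_b nf_c_x nf_x_c nf_c_e nf_e_c nf_c_f nf_f_c nf_c_h nf_h_c nf_c_i nf_i_c nf_x_e nf_e_x nf_x_f nf_f_x nf_x_h nf_h_x nf_x_i nf_i_x nf_e_f nf_f_e nf_e_h nf_h_e nf_e_i nf_i_e nf_f_h nf_h_f nf_f_i nf_i_f nf_h_i nf_i_h)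
  qed
qed

theorem mainTheorem6:
  fixes V :: "'a set" and E :: "'a \<Rightarrow> 'a \<Rightarrow> bool" and S B :: "'a set"
  assumes "graph V E"
    and "F_free V E"
    and "config V E S B"
  shows "boundary_reducible V E S (S - B) 4"
  using assms(3) unfolding config_def Let_def
  apply (elim disjE)
  apply (erule conf1[OF assms(1)])
  apply (erule conf2[OF assms(1)])
  apply (erule conf3[OF assms(1)])
  apply (erule conf4[OF assms(1)])
  apply (erule conf5[OF assms(1)])
  apply (erule conf6[OF assms(1)])
  apply (erule conf7[OF assms(1)])
  apply (erule conf8[OF assms(1)])
  apply (erule conf9[OF assms(1)])
  apply (erule conf10[OF assms(1)])
  apply (erule conf11[OF assms(1)])
  apply (erule conf12[OF assms(1)])
  apply (erule conf13[OF assms(1)])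
  done

end
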